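(* Let $n\ge 2$, $N=\binom n2$, and let $F$ be a fundamental basic block with exactly $n$ reducible elements $u_1<u_2<\cdots<u_n$ and nullity $l$. Then $F$ has an adjunct representation $$F=C_0'\,]^{b_1}_{a_1}\{c_{q_1}\}\,]^{b_2}_{a_2}\{c_{q_2}\}\cdots]^{b_l}_{a_l}\{c_{q_l}\},$$ where each adjunct chain is a single element, for each $s$ we have $a_s=u_i$, $b_s=u_j$ for some $1\le i<j\le n$ with $q_s=(i-1)n-\binom i2+j-i$, $q_1<q_2<\cdots<q_l$ (so the $l$ adjunct pairs are distinct), and $C_0'$ is the chain consisting of $u_1,\dots,u_n$ together with, for each $i$ such that $(u_i,u_{i+1})$ is one of the adjunct pairs, exactly one element $x_i$ with $u_i\prec x_i\prec u_{i+1}$ (and $u_i\prec u_{i+1}$ in $C_0'$ otherwise). In particular $F$ is isomorphic to a sublattice of $\mathrm{CF}(n)$ containing all of its reducible elements.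
   Context: An element of a lattice is reducible if it is $y\vee z$ or $y\wedge z$ for some $y,z$ both distinct from it; an element of a poset is doubly irreducible if it has at most one upper and at most one lower cover. The nullity $\eta(P)$ of a finite poset is $|E|-|V|+c$ for its cover graph (edges = coverings), $c$ the number of components. Adjunct operation: for disjoint lattices $L_1,L_2$ and $a<b$ in $L_1$ with $b$ not covering $a$, $L_1\,]_a^b\,L_2$ is $L_1\cup L_2$ with $x\le y$ iff $x\le y$ within $L_1$ or within $L_2$, or $x\in L_1,y\in L_2,x\le a$, or $x\in L_2,y\in L_1,b\le y$. An RC-lattice is a finite lattice whose reducible elements are pairwise comparable; it is an adjunct of chains $C_0\,]_{a_1}^{b_1}C_1\cdots]_{a_r}^{b_r}C_r$ ($C_0$ maximal chain), unique up to order of adjunct pairs. A basic block is a poset that has one element, or has no doubly irreducible elements, or from which removal of a doubly irreducible element reduces nullity by one. A fundamental basic block is an RC-lattice that is a basic block whose adjunct representation has pairwise distinct adjunct pairs. $\mathrm{CF}(n)$ denotes the fundamental basic block with $n$ reducible elements $u_1<\dots<u_n$ and nullity $\binom n2$: the chain $u_1\prec x_1\prec u_2\prec\cdots\prec x_{n-1}\prec u_n$ together with, for every $1\le i<j\le n$, one element $c_k$, $k=(i-1)n-\binom i2+j-i$, satisfying $u_i\prec c_k\prec u_j$. *)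

theory Defs
  imports Main
begin

text \<open>Finite posets are represented by a carrier set V and an order relation le
  (only its values on V matter).\<close>

type_synonym 'a poset = "'a set \<times> ('a \<Rightarrow> 'a \<Rightarrow> bool)"

definition po_on :: "'a set \<Rightarrow> ('a \<Rightarrow> 'a \<Rightarrow> bool) \<Rightarrow> bool" where
  "po_on V le \<longleftrightarrow> (\<forall>x\<in>V. le x x)
     \<and> (\<forall>x\<in>V. \<forall>y\<in>V. le x y \<and> le y x \<longrightarrow> x = y)
     \<and> (\<forall>x\<in>V. \<forall>y\<in>V. \<forall>z\<in>V. le x y \<and> le y z \<longrightarrow> le x z)"

definition is_lub :: "'a set \<Rightarrow> ('a \<Rightarrow> 'a \<Rightarrow> bool) \<Rightarrow> 'a \<Rightarrow> 'a \<Rightarrow> 'a \<Rightarrow> bool" where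
  "is_lub V le x y z \<longleftrightarrow> z \<in> V \<and> le x z \<and> le y z \<and> (\<forall>w\<in>V. le x w \<and> le y w \<longrightarrow> le z w)"

definition is_glb :: "'a set \<Rightarrow> ('a \<Rightarrow> 'a \<Rightarrow> bool) \<Rightarrow> 'a \<Rightarrow> 'a \<Rightarrow> 'a \<Rightarrow> bool" where
  "is_glb V le x y z \<longleftrightarrow> z \<in> V \<and> le z x \<and> le z y \<and> (\<forall>w\<in>V. le w x \<and> le w y \<longrightarrow> le w z)"

definition fin_lattice :: "'a set \<Rightarrow> ('a \<Rightarrow> 'a \<Rightarrow> bool) \<Rightarrow> bool" where
  "fin_lattice V le \<longleftrightarrow> finite V \<and> V \<noteq> {} \<and> po_on V le
     \<and> (\<forall>x\<in>V. \<forall>y\<in>V. (\<exists>z. is_lub V le x y z) \<and> (\<exists>z. is_glb V le x y z))"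

definition reducible :: "'a set \<Rightarrow> ('a \<Rightarrow> 'a \<Rightarrow> bool) \<Rightarrow> 'a \<Rightarrow> bool" where
  "reducible V le x \<longleftrightarrow> x \<in> V \<and> (\<exists>y\<in>V. \<exists>z\<in>V. y \<noteq> x \<and> z \<noteq> x \<and>
       (is_lub V le y z x \<or> is_glb V le y z x))"

definition covers :: "'a set \<Rightarrow> ('a \<Rightarrow> 'a \<Rightarrow> bool) \<Rightarrow> 'a \<Rightarrow> 'a \<Rightarrow> bool" where
  "covers V le x y \<longleftrightarrow> x \<in> V \<and> y \<in> V \<and> x \<noteq> y \<and> le x y \<and>
     \<not> (\<exists>z\<in>V. z \<noteq> x \<and> z \<noteq> y \<and> le x z \<and> le z y)"

definition doubly_irreducible :: "'a set \<Rightarrow> ('a \<Rightarrow> 'a \<Rightarrow> bool) \<Rightarrow> 'a \<Rightarrow> bool" where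
  "doubly_irreducible V le x \<longleftrightarrow> x \<in> V \<and>
     card {y\<in>V. covers V le x y} \<le> 1 \<and> card {y\<in>V. covers V le y x} \<le> 1"

definition cover_edges :: "'a set \<Rightarrow> ('a \<Rightarrow> 'a \<Rightarrow> bool) \<Rightarrow> ('a \<times> 'a) set" where
  "cover_edges V le = {(x, y). covers V le x y}"

definition cover_conn :: "'a set \<Rightarrow> ('a \<Rightarrow> 'a \<Rightarrow> bool) \<Rightarrow> ('a \<times> 'a) set" where
  "cover_conn V le = {(x, y). x \<in> V \<and> y \<in> V \<and>
     (\<lambda>a b. covers V le a b \<or> covers V le b a)\<^sup>*\<^sup>* x y}"

definition nullity :: "'a set \<Rightarrow> ('a \<Rightarrow> 'a \<Rightarrow> bool) \<Rightarrow> int" where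
  "nullity V le = int (card (cover_edges V le)) - int (card V)
                  + int (card (V // cover_conn V le))"

definition basic_block :: "'a set \<Rightarrow> ('a \<Rightarrow> 'a \<Rightarrow> bool) \<Rightarrow> bool" where
  "basic_block V le \<longleftrightarrow> card V = 1 \<or> \<not> (\<exists>x. doubly_irreducible V le x) \<or>
     (\<forall>x. doubly_irreducible V le x \<longrightarrow> nullity (V - {x}) le = nullity V le - 1)"

definition is_chain :: "'a set \<Rightarrow> ('a \<Rightarrow> 'a \<Rightarrow> bool) \<Rightarrow> 'a set \<Rightarrow> bool" where
  "is_chain V le C \<longleftrightarrow> C \<subseteq> V \<and> (\<forall>x\<in>C. \<forall>y\<in>C. le x y \<or> le y x)"

definition maximal_chain :: "'a set \<Rightarrow> ('a \<Rightarrow> 'a \<Rightarrow> bool) \<Rightarrow> 'a set \<Rightarrow> bool" where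
  "maximal_chain V le C \<longleftrightarrow> is_chain V le C \<and> (\<forall>D. is_chain V le D \<and> C \<subseteq> D \<longrightarrow> D = C)"

definition rc_lattice :: "'a set \<Rightarrow> ('a \<Rightarrow> 'a \<Rightarrow> bool) \<Rightarrow> bool" where
  "rc_lattice V le \<longleftrightarrow> fin_lattice V le \<and>
     (\<forall>x y. reducible V le x \<and> reducible V le y \<longrightarrow> le x y \<or> le y x)"

definition adjunct :: "'a poset \<Rightarrow> 'a \<Rightarrow> 'a \<Rightarrow> 'a poset \<Rightarrow> 'a poset" where
  "adjunct L1 a b L2 = (fst L1 \<union> fst L2, (\<lambda>x y.
       (x \<in> fst L1 \<and> y \<in> fst L1 \<and> snd L1 x y)
     \<or> (x \<in> fst L2 \<and> y \<in> fst L2 \<and> snd L2 x y)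
     \<or> (x \<in> fst L1 \<and> y \<in> fst L2 \<and> snd L1 x a)
     \<or> (x \<in> fst L2 \<and> y \<in> fst L1 \<and> snd L1 b y)))"

definition adjunct_ok :: "'a poset \<Rightarrow> 'a \<Rightarrow> 'a \<Rightarrow> 'a poset \<Rightarrow> bool" where
  "adjunct_ok L1 a b L2 \<longleftrightarrow> fin_lattice (fst L1) (snd L1) \<and> fin_lattice (fst L2) (snd L2)
     \<and> fst L1 \<inter> fst L2 = {} \<and> a \<in> fst L1 \<and> b \<in> fst L1 \<and> a \<noteq> b \<and> snd L1 a b
     \<and> \<not> covers (fst L1) (snd L1) a b"

fun adj_fold :: "('a \<Rightarrow> 'a \<Rightarrow> bool) \<Rightarrow> 'a poset \<Rightarrow> ('a \<times> 'a \<times> 'a set) list \<Rightarrow> 'a poset" where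
  "adj_fold le L [] = L"
| "adj_fold le L ((a, b, C) # ps) = adj_fold le (adjunct L a b (C, le)) ps"

fun adj_valid :: "('a \<Rightarrow> 'a \<Rightarrow> bool) \<Rightarrow> 'a poset \<Rightarrow> ('a \<times> 'a \<times> 'a set) list \<Rightarrow> bool" where
  "adj_valid le L [] = True"
| "adj_valid le L ((a, b, C) # ps) =
     (adjunct_ok L a b (C, le) \<and> adj_valid le (adjunct L a b (C, le)) ps)"

text \<open>(V, le) = C0 ]_{a1}^{b1} C1 ... ]_{ar}^{br} Cr, with C0 a maximal chain and each Cs a chain,
  given as the list ps of triples (a_s, b_s, C_s).\<close>
definition adjunct_rep :: "'a set \<Rightarrow> ('a \<Rightarrow> 'a \<Rightarrow> bool) \<Rightarrow> 'a set \<Rightarrow> ('a \<times> 'a \<times> 'a set) list \<Rightarrow> bool" where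
  "adjunct_rep V le C0 ps \<longleftrightarrow> maximal_chain V le C0
     \<and> (\<forall>(a, b, C) \<in> set ps. is_chain V le C \<and> C \<noteq> {})
     \<and> adj_valid le (C0, le) ps
     \<and> fst (adj_fold le (C0, le) ps) = V
     \<and> (\<forall>x\<in>V. \<forall>y\<in>V. snd (adj_fold le (C0, le) ps) x y = le x y)"

definition fundamental_basic_block :: "'a set \<Rightarrow> ('a \<Rightarrow> 'a \<Rightarrow> bool) \<Rightarrow> bool" where
  "fundamental_basic_block V le \<longleftrightarrow> rc_lattice V le \<and> basic_block V le \<and>
     (\<exists>C0 ps. adjunct_rep V le C0 ps \<and> distinct (map (\<lambda>(a, b, C). (a, b)) ps))"

definition cf_index :: "nat \<Rightarrow> nat \<Rightarrow> nat \<Rightarrow> nat" where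
  "cf_index n i j = (i - 1) * n - (i choose 2) + (j - i)"

text \<open>The lattice CF(n): U i = u_i, X i = x_i, Cc i j = c_k with k = cf_index n i j.\<close>
datatype cf_elem = U nat | X nat | Cc nat nat

definition cf_carrier :: "nat \<Rightarrow> cf_elem set" where
  "cf_carrier n = {U i | i. 1 \<le> i \<and> i \<le> n} \<union> {X i | i. 1 \<le> i \<and> i < n}
                  \<union> {Cc i j | i j. 1 \<le> i \<and> i < j \<and> j \<le> n}"

fun cf_pos :: "cf_elem \<Rightarrow> nat" where
  "cf_pos (U i) = 2 * i"
| "cf_pos (X i) = 2 * i + 1"
| "cf_pos (Cc i j) = 0"

fun cf_le :: "cf_elem \<Rightarrow> cf_elem \<Rightarrow> bool" where
  "cf_le (Cc i j) (Cc i' j') = ((i, j) = (i', j') \<or> j \<le> i')"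
| "cf_le (Cc i j) y = (2 * j \<le> cf_pos y)"
| "cf_le x (Cc i j) = (cf_pos x \<le> 2 * i)"
| "cf_le x y = (cf_pos x \<le> cf_pos y)"

definition sublattice :: "'a set \<Rightarrow> ('a \<Rightarrow> 'a \<Rightarrow> bool) \<Rightarrow> 'a set \<Rightarrow> bool" where
  "sublattice V le S \<longleftrightarrow> S \<subseteq> V \<and> S \<noteq> {} \<and>
     (\<forall>x\<in>S. \<forall>y\<in>S. \<forall>z. is_lub V le x y z \<or> is_glb V le x y z \<longrightarrow> z \<in> S)"

definition order_iso :: "'a set \<Rightarrow> ('a \<Rightarrow> 'a \<Rightarrow> bool) \<Rightarrow> 'b set \<Rightarrow> ('b \<Rightarrow> 'b \<Rightarrow> bool) \<Rightarrow> ('a \<Rightarrow> 'b) \<Rightarrow> bool" where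
  "order_iso V le W le' f \<longleftrightarrow> bij_betw f V W \<and> (\<forall>x\<in>V. \<forall>y\<in>V. le x y \<longleftrightarrow> le' (f x) (f y))"

end

theory Submission
  imports Defs "HOL-Library.Product_Lexorder"
begin


locale model =
  fixes W :: "'a set" and le :: "'a \<Rightarrow> 'a \<Rightarrow> bool" and n :: nat
    and lo hi :: "'a \<Rightarrow> nat" and u :: "nat \<Rightarrow> 'a"
  assumes fin: "finite W"
  and npos: "1 \<le> n"
  and u_in: "\<And>k. 1 \<le> k \<Longrightarrow> k \<le> n \<Longrightarrow> u k \<in> W"
  and lo_u: "\<And>k. 1 \<le> k \<Longrightarrow> k \<le> n \<Longrightarrow> lo (u k) = k"
  and hi_u: "\<And>k. 1 \<le> k \<Longrightarrow> k \<le> n \<Longrightarrow> hi (u k) = k"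
  and rng: "\<And>x. x \<in> W \<Longrightarrow> 1 \<le> lo x \<and> lo x \<le> hi x \<and> hi x \<le> n"
  and eq_u: "\<And>x. x \<in> W \<Longrightarrow> lo x = hi x \<Longrightarrow> x = u (lo x)"
  and le_iff: "\<And>x y. x \<in> W \<Longrightarrow> y \<in> W \<Longrightarrow> le x y \<longleftrightarrow> (x = y \<or> hi x \<le> lo y)"
begin

lemma po: "po_on W le"
  unfolding po_on_def
proof (intro conjI ballI impI)
  fix x assume "x \<in> W" thus "le x x" by (simp add: le_iff)
next
  fix x y assume xy: "x \<in> W" "y \<in> W" "le x y \<and> le y x"
  show "x = y"
  proof (rule ccontr)
    assume "x \<noteq> y"
    hence "hi x \<le> lo y" "hi y \<le> lo x" using xy le_iff by auto
    hence "lo x = hi x" "lo y = hi y" "lo x = lo y" using rng[OF xy(1)] rng[OF xy(2)] by auto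
    hence "x = y" using eq_u[OF xy(1)] eq_u[OF xy(2)] by simp
    thus False using \<open>x \<noteq> y\<close> by simp
  qed
next
  fix x y z assume xyz: "x \<in> W" "y \<in> W" "z \<in> W" "le x y \<and> le y z"
  have "x = y \<or> hi x \<le> lo y" "y = z \<or> hi y \<le> lo z" using le_iff xyz by auto
  thus "le x z" using le_iff[OF xyz(1,3)] rng[OF xyz(2)] by auto
qed

lemma le_refl: "x \<in> W \<Longrightarrow> le x x" by (simp add: le_iff)

lemma antisym: "x \<in> W \<Longrightarrow> y \<in> W \<Longrightarrow> le x y \<Longrightarrow> le y x \<Longrightarrow> x = y"
  using po unfolding po_on_def by blast

lemma le_trans': "x \<in> W \<Longrightarrow> y \<in> W \<Longrightarrow> z \<in> W \<Longrightarrow> le x y \<Longrightarrow> le y z \<Longrightarrow> le x z"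
  using po unfolding po_on_def by blast

lemma le_u_hi: "x \<in> W \<Longrightarrow> le x (u (hi x))"
  using rng[of x] u_in[of "hi x"] le_iff lo_u by auto

lemma le_u_lo: "x \<in> W \<Longrightarrow> le (u (lo x)) x"
  using rng[of x] u_in[of "lo x"] le_iff hi_u by auto

lemma lub_incomp:
  assumes x: "x \<in> W" and y: "y \<in> W" and nxy: "\<not> le x y" and nyx: "\<not> le y x"
  shows "is_lub W le x y (u (max (hi x) (hi y)))"
proof -
  let ?M = "max (hi x) (hi y)"
  have M: "1 \<le> ?M" "?M \<le> n" using rng[OF x] rng[OF y] by (auto simp: max_def)
  have uM: "u ?M \<in> W" using u_in M by auto
  have A: "le x (u ?M)" using le_iff[OF x uM] lo_u[OF M] by auto
  have B: "le y (u ?M)" using le_iff[OF y uM] lo_u[OF M] by auto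
  have C: "le (u ?M) w" if w: "w \<in> W" "le x w" "le y w" for w
  proof -
    have "w \<noteq> x" using nyx w by auto
    moreover have "w \<noteq> y" using nxy w by auto
    ultimately have "hi x \<le> lo w" "hi y \<le> lo w" using le_iff x y w by auto
    thus ?thesis using le_iff[OF uM w(1)] hi_u[OF M] by auto
  qed
  show ?thesis unfolding is_lub_def using uM A B C by simp
qed

lemma glb_incomp:
  assumes x: "x \<in> W" and y: "y \<in> W" and nxy: "\<not> le x y" and nyx: "\<not> le y x"
  shows "is_glb W le x y (u (min (lo x) (lo y)))"
proof -
  let ?M = "min (lo x) (lo y)"
  have M: "1 \<le> ?M" "?M \<le> n" using rng[OF x] rng[OF y] by (auto simp: min_def)
  have uM: "u ?M \<in> W" using u_in M by auto
  have A: "le (u ?M) x" using le_iff[OF uM x] hi_u[OF M] by auto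
  have B: "le (u ?M) y" using le_iff[OF uM y] hi_u[OF M] by auto
  have C: "le w (u ?M)" if w: "w \<in> W" "le w x" "le w y" for w
  proof -
    have "w \<noteq> x" using nxy w by auto
    moreover have "w \<noteq> y" using nyx w by auto
    ultimately have "hi w \<le> lo x" "hi w \<le> lo y" using le_iff x y w by auto
    thus ?thesis using le_iff[OF w(1) uM] lo_u[OF M] by auto
  qed
  show ?thesis unfolding is_glb_def using uM A B C by simp
qed

lemma lub_le: "x \<in> W \<Longrightarrow> y \<in> W \<Longrightarrow> le x y \<Longrightarrow> is_lub W le x y y"
  unfolding is_lub_def using le_refl by blast

lemma glb_le: "x \<in> W \<Longrightarrow> y \<in> W \<Longrightarrow> le x y \<Longrightarrow> is_glb W le x y x"
  unfolding is_glb_def using le_refl by blast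

lemma lub_sym: "is_lub W le x y z \<Longrightarrow> is_lub W le y x z"
  unfolding is_lub_def by blast
lemma glb_sym: "is_glb W le x y z \<Longrightarrow> is_glb W le y x z"
  unfolding is_glb_def by blast

lemma lub_unique: "is_lub W le x y z \<Longrightarrow> is_lub W le x y z' \<Longrightarrow> z = z'"
  unfolding is_lub_def using antisym by blast
lemma glb_unique: "is_glb W le x y z \<Longrightarrow> is_glb W le x y z' \<Longrightarrow> z = z'"
  unfolding is_glb_def using antisym by blast

lemma lattice: "fin_lattice W le"
  unfolding fin_lattice_def
proof (intro conjI ballI)
  show "finite W" by (rule fin)
  show "W \<noteq> {}" using u_in[of 1] npos by auto
  show "po_on W le" by (rule po)
next
  fix x y assume x: "x \<in> W" and y: "y \<in> W"
  show "\<exists>z. is_lub W le x y z"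
    using lub_le[OF x y] lub_le[OF y x] lub_sym lub_incomp[OF x y] by blast
  show "\<exists>z. is_glb W le x y z"
    using glb_le[OF x y] glb_le[OF y x] glb_sym glb_incomp[OF x y] by blast
qed

lemma lub_cases:
  assumes x: "x \<in> W" and y: "y \<in> W" and z: "is_lub W le x y z"
  shows "z = x \<or> z = y \<or> z \<in> u ` {1..n}"
proof -
  have M: "1 \<le> max (hi x) (hi y)" "max (hi x) (hi y) \<le> n" using rng[OF x] rng[OF y] by (auto simp: max_def)
  show ?thesis
  using lub_le[OF x y] lub_le[OF y x] lub_sym lub_incomp[OF x y] lub_unique[OF z] M
  by (metis atLeastAtMost_iff image_eqI)
qed

lemma glb_cases:
  assumes x: "x \<in> W" and y: "y \<in> W" and z: "is_glb W le x y z"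
  shows "z = x \<or> z = y \<or> z \<in> u ` {1..n}"
proof -
  have M: "1 \<le> min (lo x) (lo y)" "min (lo x) (lo y) \<le> n" using rng[OF x] rng[OF y] by (auto simp: min_def)
  show ?thesis
  using glb_le[OF x y] glb_le[OF y x] glb_sym glb_incomp[OF x y] glb_unique[OF z] M
  by (metis atLeastAtMost_iff image_eqI)
qed

lemma sub:
  assumes "W' \<subseteq> W" "u ` {1..n} \<subseteq> W'"
  shows "model W' le n lo hi u"
proof
  show "finite W'" using assms(1) fin finite_subset by blast
  show "1 \<le> n" by (rule npos)
  show "\<And>k. 1 \<le> k \<Longrightarrow> k \<le> n \<Longrightarrow> u k \<in> W'" using assms(2) by auto
  show "\<And>k. 1 \<le> k \<Longrightarrow> k \<le> n \<Longrightarrow> lo (u k) = k" by (rule lo_u)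
  show "\<And>k. 1 \<le> k \<Longrightarrow> k \<le> n \<Longrightarrow> hi (u k) = k" by (rule hi_u)
  show "\<And>x. x \<in> W' \<Longrightarrow> 1 \<le> lo x \<and> lo x \<le> hi x \<and> hi x \<le> n" using rng assms(1) by blast
  show "\<And>x. x \<in> W' \<Longrightarrow> lo x = hi x \<Longrightarrow> x = u (lo x)" using eq_u assms(1) by blast
  show "\<And>x y. x \<in> W' \<Longrightarrow> y \<in> W' \<Longrightarrow> le x y \<longleftrightarrow> (x = y \<or> hi x \<le> lo y)"
    using le_iff assms(1) by blast
qed

lemma cov1: "x \<in> W \<Longrightarrow> lo x < hi x \<Longrightarrow> covers W le (u (lo x)) x"
  unfolding covers_def
proof (intro conjI)
  assume x: "x \<in> W" and lh: "lo x < hi x"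
  have r: "1 \<le> lo x" "lo x \<le> n" using rng[OF x] by auto
  show "u (lo x) \<in> W" using u_in r by auto
  show "x \<in> W" by fact
  show "u (lo x) \<noteq> x" using lh hi_u[OF r] by (metis less_irrefl)
  show "le (u (lo x)) x" using le_u_lo[OF x] .
  show "\<not> (\<exists>z\<in>W. z \<noteq> u (lo x) \<and> z \<noteq> x \<and> le (u (lo x)) z \<and> le z x)"
  proof
    assume "\<exists>z\<in>W. z \<noteq> u (lo x) \<and> z \<noteq> x \<and> le (u (lo x)) z \<and> le z x"
    then obtain z where z: "z \<in> W" "z \<noteq> u (lo x)" "z \<noteq> x" "le (u (lo x)) z" "le z x" by blast
    have "lo x \<le> lo z" using z le_iff[OF u_in[OF r] z(1)] hi_u[OF r] by auto
    moreover have "hi z \<le> lo x" using z le_iff[OF z(1) x] by auto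
    ultimately have "lo z = hi z" "lo z = lo x" using rng[OF z(1)] by auto
    thus False using eq_u[OF z(1)] z(2) by metis
  qed
qed

lemma cov2: "x \<in> W \<Longrightarrow> lo x < hi x \<Longrightarrow> covers W le x (u (hi x))"
  unfolding covers_def
proof (intro conjI)
  assume x: "x \<in> W" and lh: "lo x < hi x"
  have r: "1 \<le> hi x" "hi x \<le> n" using rng[OF x] by auto
  show "u (hi x) \<in> W" using u_in r by auto
  show "x \<in> W" by fact
  show "x \<noteq> u (hi x)" using lh lo_u[OF r] by (metis less_irrefl)
  show "le x (u (hi x))" using le_u_hi[OF x] .
  show "\<not> (\<exists>z\<in>W. z \<noteq> x \<and> z \<noteq> u (hi x) \<and> le x z \<and> le z (u (hi x)))"
  proof
    assume "\<exists>z\<in>W. z \<noteq> x \<and> z \<noteq> u (hi x) \<and> le x z \<and> le z (u (hi x))"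
    then obtain z where z: "z \<in> W" "z \<noteq> u (hi x)" "z \<noteq> x" "le x z" "le z (u (hi x))" by blast
    have "hi z \<le> hi x" using z le_iff[OF z(1) u_in[OF r]] lo_u[OF r] by auto
    moreover have "hi x \<le> lo z" using z le_iff[OF x z(1)] by auto
    ultimately have "lo z = hi z" "lo z = hi x" using rng[OF z(1)] by auto
    thus False using eq_u[OF z(1)] z(2) by metis
  qed
qed

lemma cov3:
  assumes i: "1 \<le> i" "Suc i \<le> n" and nz: "\<not> (\<exists>z\<in>W. lo z = i \<and> hi z = Suc i)"
  shows "covers W le (u i) (u (Suc i))"
proof -
  have i1: "1 \<le> i" "i \<le> n" and i2: "1 \<le> Suc i" "Suc i \<le> n" using i by auto
  note U = u_in[OF i1] u_in[OF i2] lo_u[OF i1] hi_u[OF i1] lo_u[OF i2] hi_u[OF i2]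
  show ?thesis unfolding covers_def
  proof (intro conjI)
    show "u i \<noteq> u (Suc i)" using U by (metis n_not_Suc_n)
    show "le (u i) (u (Suc i))" using U le_iff by auto
    show "\<not> (\<exists>z\<in>W. z \<noteq> u i \<and> z \<noteq> u (Suc i) \<and> le (u i) z \<and> le z (u (Suc i)))"
    proof
      assume "\<exists>z\<in>W. z \<noteq> u i \<and> z \<noteq> u (Suc i) \<and> le (u i) z \<and> le z (u (Suc i))"
      then obtain z where z: "z \<in> W" "z \<noteq> u i" "z \<noteq> u (Suc i)" "le (u i) z" "le z (u (Suc i))" by blast
      have a: "i \<le> lo z" "hi z \<le> Suc i" using z le_iff U by auto
      show False
      proof (cases "lo z = hi z")
        case True
        hence "lo z = i \<or> lo z = Suc i" using a by auto
        thus False using eq_u[OF z(1) True] z(2,3) by auto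
      next
        case False
        hence "lo z = i" "hi z = Suc i" using a rng[OF z(1)] by auto
        thus False using nz z(1) by blast
      qed
    qed
  qed (use U in auto)
qed

lemma cov_conv:
  assumes c: "covers W le x y"
  shows "(lo x < hi x \<and> y = u (hi x)) \<or> (lo y < hi y \<and> x = u (lo y)) \<or>
         (\<exists>i. 1 \<le> i \<and> Suc i \<le> n \<and> x = u i \<and> y = u (Suc i) \<and> \<not> (\<exists>z\<in>W. lo z = i \<and> hi z = Suc i))"
proof -
  have x: "x \<in> W" and y: "y \<in> W" and xy: "x \<noteq> y" "le x y"
   and nz: "\<And>z. z \<in> W \<Longrightarrow> z \<noteq> x \<Longrightarrow> z \<noteq> y \<Longrightarrow> le x z \<Longrightarrow> le z y \<Longrightarrow> False"
    using c unfolding covers_def by blast+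
  have hl: "hi x \<le> lo y" using xy le_iff x y by auto
  show ?thesis
  proof (cases "lo x < hi x")
    case True
    have r: "1 \<le> hi x" "hi x \<le> n" using rng[OF x] by auto
    have "u (hi x) \<noteq> x" using True lo_u[OF r] by (metis less_irrefl)
    moreover have "le (u (hi x)) y" using le_iff[OF u_in[OF r] y] hi_u[OF r] hl by auto
    ultimately have "y = u (hi x)" using nz[OF u_in[OF r]] le_u_hi[OF x] by blast
    thus ?thesis using True by blast
  next
    case False
    hence xu: "x = u (lo x)" "lo x = hi x" using eq_u[OF x] rng[OF x] by auto
    show ?thesis
    proof (cases "lo y < hi y")
      case True
      have r: "1 \<le> lo y" "lo y \<le> n" using rng[OF y] by auto
      have "u (lo y) \<noteq> y" using True hi_u[OF r] by (metis less_irrefl)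
      moreover have "le x (u (lo y))" using le_iff[OF x u_in[OF r]] lo_u[OF r] hl by auto
      ultimately have "x = u (lo y)" using nz[OF u_in[OF r]] le_u_lo[OF y] by blast
      thus ?thesis using True by blast
    next
      case False
      hence yu: "y = u (lo y)" "lo y = hi y" using eq_u[OF y] rng[OF y] by auto
      have lt: "lo x < lo y" using hl xu yu xy(1) by (metis le_neq_implies_less)
      have ry: "1 \<le> lo x" "lo y \<le> n" using rng[OF x] rng[OF y] by auto
      have "lo y = Suc (lo x)"
      proof (rule ccontr)
        assume "lo y \<noteq> Suc (lo x)"
        hence m: "1 \<le> Suc (lo x)" "Suc (lo x) \<le> n" "lo x < Suc (lo x)" "Suc (lo x) < lo y"
          using lt ry by auto
        have "u (Suc (lo x)) \<noteq> x" using lo_u[OF m(1,2)] xu by (metis n_not_Suc_n)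
        moreover have "u (Suc (lo x)) \<noteq> y" using lo_u[OF m(1,2)] yu m(4) by (metis less_irrefl)
        moreover have "le x (u (Suc (lo x)))" using le_iff[OF x u_in[OF m(1,2)]] lo_u[OF m(1,2)] xu by auto
        moreover have "le (u (Suc (lo x))) y" using le_iff[OF u_in[OF m(1,2)] y] hi_u[OF m(1,2)] m by auto
        ultimately show False using nz[OF u_in[OF m(1,2)]] by blast
      qed
      moreover have "\<not> (\<exists>z\<in>W. lo z = lo x \<and> hi z = Suc (lo x))"
      proof
        assume "\<exists>z\<in>W. lo z = lo x \<and> hi z = Suc (lo x)"
        then obtain z where z: "z \<in> W" "lo z = lo x" "hi z = Suc (lo x)" by blast
        have "z \<noteq> x" using z xu by auto
        moreover have "z \<noteq> y" using z yu \<open>lo y = Suc (lo x)\<close> by auto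
        moreover have "le x z" using le_iff[OF x z(1)] z xu by auto
        moreover have "le z y" using le_iff[OF z(1) y] z \<open>lo y = Suc (lo x)\<close> by auto
        ultimately show False using nz[OF z(1)] by blast
      qed
      ultimately show ?thesis using xu yu ry by (metis Suc_leI lt)
    qed
  qed
qed

end



lemma po_flip: "po_on V le \<Longrightarrow> po_on V (\<lambda>x y. le y x)"
  unfolding po_on_def by blast

lemma covers_flip: "covers V (\<lambda>x y. le y x) a b = covers V le b a"
  unfolding covers_def by blast

lemma po_refl: "po_on V le \<Longrightarrow> x \<in> V \<Longrightarrow> le x x" unfolding po_on_def by blast
lemma po_antisym: "po_on V le \<Longrightarrow> x \<in> V \<Longrightarrow> y \<in> V \<Longrightarrow> le x y \<Longrightarrow> le y x \<Longrightarrow> x = y"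
  unfolding po_on_def by blast
lemma po_trans: "po_on V le \<Longrightarrow> x \<in> V \<Longrightarrow> y \<in> V \<Longrightarrow> z \<in> V \<Longrightarrow> le x y \<Longrightarrow> le y z \<Longrightarrow> le x z"
  unfolding po_on_def by blast

lemma ex_maximal:
  assumes "finite S" "S \<noteq> {}" "S \<subseteq> V" "po_on V le"
  shows "\<exists>m\<in>S. \<forall>z\<in>S. le m z \<longrightarrow> z = m"
  using assms
proof (induction S rule: finite_ne_induct)
  case (singleton x) thus ?case by auto
next
  case (insert x F)
  then obtain m where m: "m \<in> F" "\<forall>z\<in>F. le m z \<longrightarrow> z = m" by auto
  show ?case
  proof (cases "le m x")
    case True
    have "\<forall>z\<in>insert x F. le x z \<longrightarrow> z = x"
    proof (intro ballI impI)
      fix z assume z: "z \<in> insert x F" "le x z"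
      show "z = x"
      proof (cases "z = x")
        case False
        hence zF: "z \<in> F" using z by auto
        have "le m z" using po_trans[OF insert(6), of m x z] True z(2) m(1) zF insert(5) by auto
        hence "z = m" using m zF by auto
        thus ?thesis using po_antisym[OF insert(6), of m x] True z(2) m(1) insert(5) by auto
      qed
    qed
    thus ?thesis by auto
  next
    case False
    thus ?thesis using m by auto
  qed
qed

lemma ex_lower_cover:
  assumes fin: "finite V" and po: "po_on V le" and x: "x \<in> V" and v: "v \<in> V"
    and xv: "le x v" "x \<noteq> v"
  shows "\<exists>w. covers V le w v \<and> le x w"
proof -
  let ?S = "{w \<in> V. le x w \<and> le w v \<and> w \<noteq> v}"
  have "x \<in> ?S" using x xv po_refl[OF po x] by auto
  hence ne: "?S \<noteq> {}" by blast
  have fS: "finite ?S" using fin by auto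
  have sS: "?S \<subseteq> V" by blast
  obtain m where m: "m \<in> ?S" "\<forall>z\<in>?S. le m z \<longrightarrow> z = m"
    using ex_maximal[OF fS ne sS po] by blast
  have "covers V le m v"
    unfolding covers_def
  proof (intro conjI)
    show "\<not> (\<exists>z\<in>V. z \<noteq> m \<and> z \<noteq> v \<and> le m z \<and> le z v)"
    proof
      assume "\<exists>z\<in>V. z \<noteq> m \<and> z \<noteq> v \<and> le m z \<and> le z v"
      then obtain z where z: "z \<in> V" "z \<noteq> m" "z \<noteq> v" "le m z" "le z v" by blast
      have "le x z" using po_trans[OF po x _ z(1)] m z by auto
      hence "z \<in> ?S" using z by auto
      thus False using m z by auto
    qed
  qed (use m v in auto)
  thus ?thesis using m by auto
qed

lemma ex_upper_cover:
  assumes fin: "finite V" and po: "po_on V le" and x: "x \<in> V" and v: "v \<in> V"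
    and xv: "le v x" "x \<noteq> v"
  shows "\<exists>w. covers V le v w \<and> le w x"
  using ex_lower_cover[OF fin po_flip[OF po] x v xv] covers_flip by metis

lemma lattice_bot:
  assumes "fin_lattice V le"
  shows "\<exists>e\<in>V. \<forall>w\<in>V. le e w"
proof -
  have fin: "finite V" "V \<noteq> {}" and po: "po_on V le" using assms unfolding fin_lattice_def by auto
  obtain m where m: "m \<in> V" "\<forall>z\<in>V. le z m \<longrightarrow> z = m"
    using ex_maximal[OF fin(1,2) subset_refl po_flip[OF po]] by auto
  have "le m w" if w: "w \<in> V" for w
  proof -
    obtain g where g: "is_glb V le m w g" using assms m(1) w unfolding fin_lattice_def by blast
    hence "g \<in> V" "le g m" "le g w" unfolding is_glb_def by auto
    thus ?thesis using m by auto
  qed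
  thus ?thesis using m by auto
qed

lemma lattice_top:
  assumes "fin_lattice V le"
  shows "\<exists>e\<in>V. \<forall>w\<in>V. le w e"
proof -
  have fin: "finite V" "V \<noteq> {}" and po: "po_on V le" using assms unfolding fin_lattice_def by auto
  obtain m where m: "m \<in> V" "\<forall>z\<in>V. le m z \<longrightarrow> z = m"
    using ex_maximal[OF fin(1,2) subset_refl po] by auto
  have "le w m" if w: "w \<in> V" for w
  proof -
    obtain g where g: "is_lub V le m w g" using assms m(1) w unfolding fin_lattice_def by blast
    hence "g \<in> V" "le m g" "le w g" unfolding is_lub_def by auto
    thus ?thesis using m by auto
  qed
  thus ?thesis using m by auto
qed

definition cR :: "'a set \<Rightarrow> ('a \<Rightarrow> 'a \<Rightarrow> bool) \<Rightarrow> 'a \<Rightarrow> 'a \<Rightarrow> bool" where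
  "cR V le = (\<lambda>a b. covers V le a b \<or> covers V le b a)"


lemma conn_least1:
  assumes fin: "finite V" and po: "po_on V le" and e: "e \<in> V" "\<forall>w\<in>V. le e w"
  shows "w \<in> V \<Longrightarrow> (cR V le)\<^sup>*\<^sup>* e w"
proof (induction w rule: measure_induct_rule[where f="\<lambda>w. card {z \<in> V. le z w}"])
  case (less w)
  show ?case
  proof (cases "w = e")
    case True thus ?thesis by simp
  next
    case False
    have ew: "le e w" "e \<noteq> w" using e(2) less.prems False by auto
    obtain w' where w': "covers V le w' w" "le e w'"
      using ex_lower_cover[OF fin po e(1) less.prems ew] by blast
    have w'V: "w' \<in> V" and ww: "le w' w" "w' \<noteq> w" using w' unfolding covers_def by auto
    have s1: "{z \<in> V. le z w'} \<subseteq> {z \<in> V. le z w}" using po_trans[OF po _ w'V less.prems] ww by auto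
    have s2: "w \<notin> {z \<in> V. le z w'}" using po_antisym[OF po w'V less.prems] ww by auto
    have s3: "w \<in> {z \<in> V. le z w}" using po_refl[OF po less.prems] less.prems by auto
    have fw: "finite {z \<in> V. le z w}" using fin by auto
    have "card {z \<in> V. le z w'} < card {z \<in> V. le z w}"
      by (rule psubset_card_mono[OF fw]) (use s1 s2 s3 in blast)
    hence "(cR V le)\<^sup>*\<^sup>* e w'" using less.IH w'V by blast
    moreover have "cR V le w' w" using w' unfolding cR_def by auto
    ultimately show ?thesis by (rule rtranclp.rtrancl_into_rtrancl)
  qed
qed

lemma conn_least:
  assumes fin: "finite V" and po: "po_on V le" and e: "e \<in> V" "\<forall>w\<in>V. le e w"
  shows "\<forall>w\<in>V. (cR V le)\<^sup>*\<^sup>* e w"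
proof
  fix w assume "w \<in> V" thus "(cR V le)\<^sup>*\<^sup>* e w" by (rule conn_least1[OF assms])
qed

lemma conn_quot:
  assumes ne: "V \<noteq> {}" and c: "\<forall>w\<in>V. (cR V le)\<^sup>*\<^sup>* e w" and e: "e \<in> V"
  shows "card (V // cover_conn V le) = 1"
proof -
  have sym: "symp (cR V le)" unfolding cR_def symp_def by blast
  have all: "(cR V le)\<^sup>*\<^sup>* x y" if "x \<in> V" "y \<in> V" for x y
  proof -
    have "(cR V le)\<^sup>*\<^sup>* e x" using c that by blast
    hence "(cR V le)\<^sup>*\<^sup>* x e" using sympD[OF symp_rtranclp[OF sym]] by blast
    moreover have "(cR V le)\<^sup>*\<^sup>* e y" using c that by blast
    ultimately show ?thesis by (rule rtranclp_trans)
  qed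
  have eq: "cover_conn V le `` {x} = V" if "x \<in> V" for x
  proof
    show "cover_conn V le `` {x} \<subseteq> V" unfolding cover_conn_def by auto
    show "V \<subseteq> cover_conn V le `` {x}"
    proof
      fix y assume "y \<in> V"
      hence "(cR V le)\<^sup>*\<^sup>* x y" using all that by blast
      thus "y \<in> cover_conn V le `` {x}" unfolding cover_conn_def cR_def using that \<open>y \<in> V\<close> by simp
    qed
  qed
  have "V // cover_conn V le = {V}"
  proof (rule set_eqI)
    fix X
    show "X \<in> V // cover_conn V le \<longleftrightarrow> X \<in> {V}"
    proof
      assume "X \<in> V // cover_conn V le"
      then obtain x where "x \<in> V" "X = cover_conn V le `` {x}" unfolding quotient_def by blast
      thus "X \<in> {V}" using eq by simp
    next
      assume "X \<in> {V}"
      moreover obtain x where x: "x \<in> V" using ne by blast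
      ultimately show "X \<in> V // cover_conn V le" using eq[OF x] quotientI[OF x, of "cover_conn V le"] by simp
    qed
  qed
  thus ?thesis by simp
qed

lemma conn_quot_least:
  assumes fin: "finite V" and po: "po_on V le" and e: "e \<in> V" "\<forall>w\<in>V. le e w"
  shows "card (V // cover_conn V le) = 1"
proof -
  have "V \<noteq> {}" using e by auto
  thus ?thesis by (rule conn_quot[OF _ conn_least[OF assms] e(1)])
qed

lemma cover_conn_flip: "cover_conn V (\<lambda>x y. le y x) = cover_conn V le"
proof -
  have "(\<lambda>a b. covers V (\<lambda>x y. le y x) a b \<or> covers V (\<lambda>x y. le y x) b a) = (\<lambda>a b. covers V le a b \<or> covers V le b a)"
    by (intro ext) (auto simp: covers_flip[of V le])
  thus ?thesis unfolding cover_conn_def by simp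
qed

lemma conn_quot_greatest:
  assumes fin: "finite V" and po: "po_on V le" and e: "e \<in> V" "\<forall>w\<in>V. le w e"
  shows "card (V // cover_conn V le) = 1"
proof -
  have "\<forall>w\<in>V. (\<lambda>x y. le y x) e w" using e by simp
  from conn_quot_least[OF fin po_flip[OF po] e(1) this] show ?thesis by (simp add: cover_conn_flip[of V le])
qed



lemma covers_sub_mono: "W \<subseteq> V \<Longrightarrow> x \<in> W \<Longrightarrow> y \<in> W \<Longrightarrow> covers V le x y \<Longrightarrow> covers W le x y"
  unfolding covers_def by blast

lemma subset_covers:
  assumes po: "po_on V le" and v: "v \<in> V" and x: "x \<in> V" "x \<noteq> v" and y: "y \<in> V" "y \<noteq> v"
    and c: "covers (V - {v}) le x y" and nc: "\<not> covers V le x y"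
  shows "covers V le x v \<and> covers V le v y"
proof -
  have xy: "x \<noteq> y" "le x y" and nz: "\<And>z. z \<in> V - {v} \<Longrightarrow> z \<noteq> x \<Longrightarrow> z \<noteq> y \<Longrightarrow> le x z \<Longrightarrow> le z y \<Longrightarrow> False"
    using c unfolding covers_def by blast+
  obtain z where z: "z \<in> V" "z \<noteq> x" "z \<noteq> y" "le x z" "le z y" using nc xy x y unfolding covers_def by blast
  have zv: "z = v" using nz z by blast
  have xv: "le x v" "le v y" using z zv by auto
  have "covers V le x v" unfolding covers_def
  proof (intro conjI)
    show "\<not> (\<exists>z\<in>V. z \<noteq> x \<and> z \<noteq> v \<and> le x z \<and> le z v)"
    proof
      assume "\<exists>z\<in>V. z \<noteq> x \<and> z \<noteq> v \<and> le x z \<and> le z v"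
      then obtain w where w: "w \<in> V" "w \<noteq> x" "w \<noteq> v" "le x w" "le w v" by blast
      have "le w y" using po_trans[OF po w(1) v y(1)] w xv by auto
      moreover have "w \<noteq> y" using po_antisym[OF po v y(1)] w xv y by auto
      ultimately show False using nz[of w] w by blast
    qed
  qed (use x v xv in auto)
  moreover have "covers V le v y" unfolding covers_def
  proof (intro conjI)
    show "\<not> (\<exists>z\<in>V. z \<noteq> v \<and> z \<noteq> y \<and> le v z \<and> le z y)"
    proof
      assume "\<exists>z\<in>V. z \<noteq> v \<and> z \<noteq> y \<and> le v z \<and> le z y"
      then obtain w where w: "w \<in> V" "w \<noteq> v" "w \<noteq> y" "le v w" "le w y" by blast
      have "le x w" using po_trans[OF po x(1) v w(1)] w xv by auto
      moreover have "w \<noteq> x" using po_antisym[OF po x(1) v] w xv x by auto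
      ultimately show False using nz[of w] w by blast
    qed
  qed (use y v xv in auto)
  ultimately show ?thesis by blast
qed

lemma nullity_remove:
  assumes fin: "finite V" and po: "po_on V le" and v: "v \<in> V"
    and di: "doubly_irreducible V le v"
    and c1: "card (V // cover_conn V le) = 1"
    and c2: "card ((V - {v}) // cover_conn (V - {v}) le) = 1"
    and nl: "nullity (V - {v}) le = nullity V le - 1"
  shows "\<exists>p q. covers V le p v \<and> covers V le v q \<and> (\<exists>z\<in>V. z \<noteq> v \<and> z \<noteq> p \<and> z \<noteq> q \<and> le p z \<and> le z q)"
proof -
  define E where "E = cover_edges V le"
  define E' where "E' = cover_edges (V - {v}) le"
  define Lc where "Lc = {y\<in>V. covers V le y v}"
  define Uc where "Uc = {y\<in>V. covers V le v y}"
  define Ev where "Ev = {e\<in>E. fst e = v \<or> snd e = v}"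
  define G where "G = {(x, y). covers V le x v \<and> covers V le v y \<and> covers (V - {v}) le x y}"
  have cL: "card Lc \<le> 1" and cU: "card Uc \<le> 1" using di unfolding doubly_irreducible_def Lc_def Uc_def by auto
  have fE: "finite E" 
  proof -
    have "E \<subseteq> V \<times> V" unfolding E_def cover_edges_def covers_def by auto
    thus ?thesis using fin finite_subset by blast
  qed
  have fL: "finite Lc" "finite Uc" using fin unfolding Lc_def Uc_def by auto
  have Ev_eq: "Ev = (\<lambda>y. (y, v)) ` Lc \<union> (\<lambda>y. (v, y)) ` Uc"
    unfolding Ev_def E_def cover_edges_def Lc_def Uc_def covers_def by auto
  have disj: "(\<lambda>y. (y, v)) ` Lc \<inter> (\<lambda>y. (v, y)) ` Uc = {}"
    unfolding Lc_def covers_def by auto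
  have cEv: "card Ev = card Lc + card Uc"
    unfolding Ev_eq using card_Un_disjoint[OF _ _ disj] fL
    by (simp add: card_image inj_on_def)
  have E'_eq: "E' = (E - Ev) \<union> G"
  proof
    show "E' \<subseteq> (E - Ev) \<union> G"
    proof
      fix e assume "e \<in> E'"
      then obtain x y where e: "e = (x, y)" and c: "covers (V - {v}) le x y"
        unfolding E'_def cover_edges_def by auto
      have xy: "x \<in> V" "x \<noteq> v" "y \<in> V" "y \<noteq> v" using c unfolding covers_def by auto
      show "e \<in> (E - Ev) \<union> G"
      proof (cases "covers V le x y")
        case True thus ?thesis using e xy unfolding E_def Ev_def cover_edges_def by auto
      next
        case False
        thus ?thesis using subset_covers[OF po v xy(1,2) xy(3,4) c False] c e unfolding G_def by auto
      qed
    qed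
    show "(E - Ev) \<union> G \<subseteq> E'"
    proof
      fix e assume "e \<in> (E - Ev) \<union> G"
      thus "e \<in> E'"
      proof
        assume "e \<in> E - Ev"
        then obtain x y where e: "e = (x, y)" "covers V le x y" "x \<noteq> v" "y \<noteq> v"
          unfolding E_def Ev_def cover_edges_def by auto
        hence "covers (V - {v}) le x y" using covers_sub_mono[of "V - {v}" V x y le] unfolding covers_def by auto
        thus ?thesis using e unfolding E'_def cover_edges_def by auto
      next
        assume "e \<in> G" thus ?thesis unfolding G_def E'_def cover_edges_def by auto
      qed
    qed
  qed
  have disj2: "(E - Ev) \<inter> G = {}"
  proof -
    have "\<not> covers V le x y" if "(x, y) \<in> G" for x y
    proof -
      have a: "covers V le x v" "covers V le v y" using that unfolding G_def by auto
      thus ?thesis unfolding covers_def by auto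
    qed
    thus ?thesis unfolding E_def cover_edges_def by auto
  qed
  have GLU: "G \<subseteq> Lc \<times> Uc" unfolding G_def Lc_def Uc_def covers_def by auto
  have fG: "finite G" using finite_subset[OF GLU] fL by auto
  have cG: "card G \<le> card Lc * card Uc" using card_mono[OF _ GLU] fL by (simp add: card_cartesian_product)
  have cE': "card E' = card E - card Ev + card G"
  proof -
    have "card E' = card (E - Ev) + card G" unfolding E'_eq using card_Un_disjoint[OF _ fG disj2] fE by auto
    moreover have "card (E - Ev) = card E - card Ev" using card_Diff_subset[of Ev E] fE
      unfolding Ev_def by (auto intro: finite_subset)
    ultimately show ?thesis by simp
  qed
  have EvE: "card Ev \<le> card E" using card_mono[OF fE] unfolding Ev_def by auto
  have cV: "card (V - {v}) = card V - 1" using v fin by auto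
  have "card V \<noteq> 0" using v fin by auto
  hence V1: "card V \<ge> 1" by simp
  have "int (card E') - int (card V - 1) + 1 = int (card E) - int (card V) + 1 - 1"
    using nl c1 c2 cV unfolding nullity_def E_def E'_def by simp
  hence "int (card E') = int (card E) - 2" using V1 by simp
  hence "int (card E) - int (card Ev) + int (card G) = int (card E) - 2" using cE' EvE by simp
  hence eq: "int (card Ev) = int (card G) + 2" by simp
  have "card Lc = 1" "card Uc = 1" "card G = 0"
  proof -
    have "card Ev = card G + 2" using eq by simp
    thus "card Lc = 1" "card Uc = 1" "card G = 0" using cL cU cG cEv by (auto simp: le_Suc_eq)
  qed
  then obtain p q where p: "Lc = {p}" and q: "Uc = {q}" by (meson card_1_singletonE)
  have Gemp: "G = {}" using \<open>card G = 0\<close> fG by auto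
  have pv: "covers V le p v" and vq: "covers V le v q" using p q unfolding Lc_def Uc_def by auto
  have pV: "p \<in> V" "p \<noteq> v" "le p v" and qV: "q \<in> V" "q \<noteq> v" "le v q"
    using pv vq unfolding covers_def by auto
  have pq: "p \<noteq> q" using po_antisym[OF po pV(1) v] pV qV by auto
  have lpq: "le p q" using po_trans[OF po pV(1) v qV(1)] pV qV by auto
  have "\<not> covers (V - {v}) le p q" using Gemp pv vq unfolding G_def by auto
  then obtain z where z: "z \<in> V - {v}" "z \<noteq> p" "z \<noteq> q" "le p z" "le z q"
    using pV qV pq lpq unfolding covers_def by auto
  thus ?thesis using pv vq by blast
qed



lemma po_sub: "po_on V le \<Longrightarrow> W \<subseteq> V \<Longrightarrow> po_on W le"
  unfolding po_on_def by blast

locale fbb =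
  fixes V :: "'a set" and le :: "'a \<Rightarrow> 'a \<Rightarrow> bool" and n :: nat and u :: "nat \<Rightarrow> 'a"
  assumes n2: "n \<ge> 2"
  and lat: "fin_lattice V le"
  and bb: "basic_block V le"
  and uinc: "\<forall>i\<in>{1..n}. \<forall>j\<in>{1..n}. i < j \<longrightarrow> le (u i) (u j) \<and> u i \<noteq> u j"
  and red: "{x. reducible V le x} = u ` {1..n}"
begin

lemma fin: "finite V" using lat unfolding fin_lattice_def by auto
lemma po: "po_on V le" using lat unfolding fin_lattice_def by auto

lemma uV: "k \<in> {1..n} \<Longrightarrow> u k \<in> V"
proof -
  assume "k \<in> {1..n}"
  hence "reducible V le (u k)" using red by blast
  thus ?thesis unfolding reducible_def by auto
qed

lemma u_le: "a \<in> {1..n} \<Longrightarrow> b \<in> {1..n} \<Longrightarrow> le (u a) (u b) \<longleftrightarrow> a \<le> b"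
proof -
  assume a: "a \<in> {1..n}" and b: "b \<in> {1..n}"
  show ?thesis
  proof (cases "a \<le> b")
    case True
    thus ?thesis using uinc a b po_refl[OF po uV[OF a]] by (cases "a = b") auto
  next
    case False
    hence "le (u b) (u a)" "u b \<noteq> u a" using uinc a b by auto
    hence "\<not> le (u a) (u b)" using po_antisym[OF po uV[OF a] uV[OF b]] by auto
    thus ?thesis using False by simp
  qed
qed

lemma u_inj: "a \<in> {1..n} \<Longrightarrow> b \<in> {1..n} \<Longrightarrow> u a = u b \<Longrightarrow> a = b"
  using u_le[of a b] u_le[of b a] po_refl[OF po uV] by (metis le_antisym)

definition R where "R = u ` {1..n}"
definition D where "D = V - R"

lemma RV: "R \<subseteq> V" unfolding R_def using uV by auto

lemma red_iff: "x \<in> V \<Longrightarrow> reducible V le x \<longleftrightarrow> x \<in> R"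
  using red unfolding R_def by blast

lemma nonred_lower:
  assumes v: "v \<in> V" "\<not> reducible V le v" and a: "covers V le a v" and b: "covers V le b v"
  shows "a = b"
proof (rule ccontr)
  assume ab: "a \<noteq> b"
  have aV: "a \<in> V" "a \<noteq> v" "le a v" and bV: "b \<in> V" "b \<noteq> v" "le b v" using a b unfolding covers_def by auto
  obtain z where z: "is_lub V le a b z" using lat aV bV unfolding fin_lattice_def by blast
  have zV: "z \<in> V" "le a z" "le b z" "le z v" using z v aV bV unfolding is_lub_def by auto
  have "z \<noteq> a"
  proof
    assume "z = a"
    hence "le b a" using zV by simp
    thus False using b aV ab unfolding covers_def by blast
  qed
  hence "z = v" using a zV unfolding covers_def by blast
  hence "is_lub V le a b v" using z by simp
  hence "reducible V le v" unfolding reducible_def using aV bV v by blast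
  thus False using v by simp
qed

lemma nonred_upper:
  assumes v: "v \<in> V" "\<not> reducible V le v" and a: "covers V le v a" and b: "covers V le v b"
  shows "a = b"
proof (rule ccontr)
  assume ab: "a \<noteq> b"
  have aV: "a \<in> V" "a \<noteq> v" "le v a" and bV: "b \<in> V" "b \<noteq> v" "le v b" using a b unfolding covers_def by auto
  obtain z where z: "is_glb V le a b z" using lat aV bV unfolding fin_lattice_def by blast
  have zV: "z \<in> V" "le z a" "le z b" "le v z" using z v aV bV unfolding is_glb_def by auto
  have "z \<noteq> a"
  proof
    assume "z = a"
    hence "le a b" using zV by simp
    thus False using b aV ab unfolding covers_def by blast
  qed
  hence "z = v" using a zV unfolding covers_def by blast
  hence "is_glb V le a b v" using z by simp
  hence "reducible V le v" unfolding reducible_def using aV bV v by blast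
  thus False using v by simp
qed

lemma card_le1:
  assumes "finite S" "\<And>x y. x \<in> S \<Longrightarrow> y \<in> S \<Longrightarrow> x = y" shows "card S \<le> 1"
proof -
  have "card S \<le> Suc 0" using card_le_Suc0_iff_eq[OF assms(1)] assms(2) by blast
  thus ?thesis by simp
qed

lemma nonred_di: "v \<in> V \<Longrightarrow> \<not> reducible V le v \<Longrightarrow> doubly_irreducible V le v"
  unfolding doubly_irreducible_def
  using card_le1[of "{y \<in> V. covers V le v y}"] card_le1[of "{y \<in> V. covers V le y v}"]
    nonred_lower[of v] nonred_upper[of v] fin by auto

lemma u12: "u 1 \<in> V" "u 2 \<in> V" "u 1 \<noteq> u 2" using uV uinc n2 by auto

lemma cardV: "card V \<noteq> 1"
proof
  assume "card V = 1"
  then obtain a where "V = {a}" by (meson card_1_singletonE)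
  thus False using u12 by auto
qed

lemma di_struct:
  assumes v: "v \<in> V" "\<not> reducible V le v"
  shows "\<exists>p q. covers V le p v \<and> covers V le v q \<and> (\<exists>z\<in>V. z \<noteq> v \<and> z \<noteq> p \<and> z \<noteq> q \<and> le p z \<and> le z q)"
proof -
  have di: "doubly_irreducible V le v" using nonred_di[OF v] .
  have nl: "nullity (V - {v}) le = nullity V le - 1"
    using bb di cardV unfolding basic_block_def by blast
  obtain e where e: "e \<in> V" "\<forall>w\<in>V. le e w" using lattice_bot[OF lat] by blast
  obtain t where t: "t \<in> V" "\<forall>w\<in>V. le w t" using lattice_top[OF lat] by blast
  have c1: "card (V // cover_conn V le) = 1" using conn_quot_least[OF fin po e] .
  have fin': "finite (V - {v})" using fin by auto
  have po': "po_on (V - {v}) le" using po_sub[OF po] by blast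
  have c2: "card ((V - {v}) // cover_conn (V - {v}) le) = 1"
  proof (cases "v = e")
    case False
    thus ?thesis using conn_quot_least[OF fin' po', of e] e by auto
  next
    case True
    have "t \<noteq> e"
    proof
      assume "t = e"
      hence "\<forall>w\<in>V. w = e" using e t po_antisym[OF po] by blast
      hence "u 1 = u 2" using u12 by metis
      thus False using u12 by simp
    qed
    thus ?thesis using conn_quot_greatest[OF fin' po', of t] t True by auto
  qed
  show ?thesis by (rule nullity_remove[OF fin po v(1) di c1 c2 nl])
qed

definition Pc where "Pc v = (THE p. covers V le p v)"
definition Qc where "Qc v = (THE q. covers V le v q)"

lemma D_nonred: "v \<in> D \<Longrightarrow> v \<in> V \<and> \<not> reducible V le v"
  using red_iff unfolding D_def by auto

lemma Pc: "v \<in> D \<Longrightarrow> covers V le (Pc v) v"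
proof -
  assume vD: "v \<in> D"
  obtain p where p: "covers V le p v" using di_struct D_nonred[OF vD] by blast
  have "\<And>p'. covers V le p' v \<Longrightarrow> p' = p" using nonred_lower D_nonred[OF vD] p by blast
  hence "Pc v = p" unfolding Pc_def using p by (rule the_equality[rotated]) 
  thus ?thesis using p by simp
qed

lemma Qc: "v \<in> D \<Longrightarrow> covers V le v (Qc v)"
proof -
  assume vD: "v \<in> D"
  obtain q where q: "covers V le v q" using di_struct D_nonred[OF vD] by blast
  have "\<And>q'. covers V le v q' \<Longrightarrow> q' = q" using nonred_upper D_nonred[OF vD] q by blast
  hence "Qc v = q" unfolding Qc_def using q by (rule the_equality[rotated]) 
  thus ?thesis using q by simp
qed

lemma Pc_uniq: "v \<in> D \<Longrightarrow> covers V le p v \<Longrightarrow> p = Pc v"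
  using nonred_lower D_nonred Pc by blast
lemma Qc_uniq: "v \<in> D \<Longrightarrow> covers V le v q \<Longrightarrow> q = Qc v"
  using nonred_upper D_nonred Qc by blast

lemma below_Pc: "v \<in> D \<Longrightarrow> x \<in> V \<Longrightarrow> le x v \<Longrightarrow> x \<noteq> v \<Longrightarrow> le x (Pc v)"
proof -
  assume a: "v \<in> D" "x \<in> V" "le x v" "x \<noteq> v"
  obtain w where "covers V le w v" "le x w" using ex_lower_cover[OF fin po a(2) _ a(3,4)] a D_nonred by blast
  thus ?thesis using Pc_uniq a by blast
qed

lemma above_Qc: "v \<in> D \<Longrightarrow> x \<in> V \<Longrightarrow> le v x \<Longrightarrow> x \<noteq> v \<Longrightarrow> le (Qc v) x"
proof -
  assume a: "v \<in> D" "x \<in> V" "le v x" "x \<noteq> v"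
  obtain w where "covers V le v w" "le w x" using ex_upper_cover[OF fin po a(2) _ a(3,4)] a D_nonred by blast
  thus ?thesis using Qc_uniq a by blast
qed

lemma Pc_R: "v \<in> D \<Longrightarrow> Pc v \<in> R"
proof (rule ccontr)
  assume vD: "v \<in> D" and nR: "Pc v \<notin> R"
  have wv: "covers V le (Pc v) v" using Pc[OF vD] .
  have wV: "Pc v \<in> V" using wv unfolding covers_def by auto
  have wnr: "\<not> reducible V le (Pc v)" using red_iff[OF wV] nR by simp
  obtain p q z where pq: "covers V le p (Pc v)" "covers V le (Pc v) q" and
    z: "z \<in> V" "z \<noteq> Pc v" "z \<noteq> p" "z \<noteq> q" "le p z" "le z q"
    using di_struct[OF wV wnr] by blast
  have qv: "q = v" using nonred_upper[OF wV wnr pq(2) wv] .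
  have "le z (Pc v)" using below_Pc[OF vD z(1)] z qv by auto
  thus False using pq(1) z unfolding covers_def by blast
qed

lemma Qc_R: "v \<in> D \<Longrightarrow> Qc v \<in> R"
proof (rule ccontr)
  assume vD: "v \<in> D" and nR: "Qc v \<notin> R"
  have wv: "covers V le v (Qc v)" using Qc[OF vD] .
  have wV: "Qc v \<in> V" using wv unfolding covers_def by auto
  have wnr: "\<not> reducible V le (Qc v)" using red_iff[OF wV] nR by simp
  obtain p q z where pq: "covers V le p (Qc v)" "covers V le (Qc v) q" and
    z: "z \<in> V" "z \<noteq> Qc v" "z \<noteq> p" "z \<noteq> q" "le p z" "le z q"
    using di_struct[OF wV wnr] by blast
  have pv: "p = v" using nonred_lower[OF wV wnr pq(1) wv] .
  have "le (Qc v) z" using above_Qc[OF vD z(1)] z pv by auto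
  thus False using pq(2) z unfolding covers_def by blast
qed

definition idx where "idx y = (THE i. i \<in> {1..n} \<and> u i = y)"

lemma idx_u: "k \<in> {1..n} \<Longrightarrow> idx (u k) = k"
  unfolding idx_def using u_inj by blast

lemma idx_R: "y \<in> R \<Longrightarrow> idx y \<in> {1..n} \<and> u (idx y) = y"
  unfolding R_def using idx_u by auto

definition lo where "lo x = (if x \<in> R then idx x else idx (Pc x))"
definition hi where "hi x = (if x \<in> R then idx x else idx (Qc x))"

lemma lo_u: "k \<in> {1..n} \<Longrightarrow> lo (u k) = k" unfolding lo_def R_def using idx_u by auto
lemma hi_u: "k \<in> {1..n} \<Longrightarrow> hi (u k) = k" unfolding hi_def R_def using idx_u by auto

lemma B: "x \<in> V \<Longrightarrow> u (lo x) = (if x \<in> R then x else Pc x) \<and> lo x \<in> {1..n}"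
  unfolding lo_def using idx_R Pc_R D_def by auto
lemma T: "x \<in> V \<Longrightarrow> u (hi x) = (if x \<in> R then x else Qc x) \<and> hi x \<in> {1..n}"
  unfolding hi_def using idx_R Qc_R D_def by auto

lemma le_B: "a \<in> R \<Longrightarrow> y \<in> V \<Longrightarrow> le a y \<longleftrightarrow> le a (u (lo y))"
proof -
  assume a: "a \<in> R" and y: "y \<in> V"
  show ?thesis
  proof (cases "y \<in> R")
    case True thus ?thesis using B[OF y] by simp
  next
    case False
    hence yD: "y \<in> D" using y D_def by auto
    have ay: "a \<noteq> y" using a False by auto
    have PV: "Pc y \<in> V" "le (Pc y) y" using Pc[OF yD] unfolding covers_def by auto
    show ?thesis using B[OF y] False below_Pc[OF yD _ _ ay] RV a po_trans[OF po _ PV(1) y] PV by auto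
  qed
qed

lemma le_T: "b \<in> R \<Longrightarrow> x \<in> V \<Longrightarrow> le x b \<longleftrightarrow> le (u (hi x)) b"
proof -
  assume b: "b \<in> R" and x: "x \<in> V"
  show ?thesis
  proof (cases "x \<in> R")
    case True thus ?thesis using T[OF x] by simp
  next
    case False
    hence xD: "x \<in> D" using x D_def by auto
    have bx: "b \<noteq> x" using b False by auto
    have QV: "Qc x \<in> V" "le x (Qc x)" using Qc[OF xD] unfolding covers_def by auto
    show ?thesis using T[OF x] False above_Qc[OF xD _ _ bx] RV b po_trans[OF po x QV(1)] QV by auto
  qed
qed

lemma le_T2: "x \<in> V \<Longrightarrow> y \<in> V \<Longrightarrow> x \<noteq> y \<Longrightarrow> le x y \<longleftrightarrow> le (u (hi x)) y"
proof -
  assume x: "x \<in> V" and y: "y \<in> V" and xy: "x \<noteq> y"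
  show ?thesis
  proof (cases "x \<in> R")
    case True thus ?thesis using T[OF x] by simp
  next
    case False
    hence xD: "x \<in> D" using x D_def by auto
    have QV: "Qc x \<in> V" "le x (Qc x)" using Qc[OF xD] unfolding covers_def by auto
    show ?thesis using T[OF x] False above_Qc[OF xD y _ xy[symmetric]] po_trans[OF po x QV(1) y] QV by auto
  qed
qed

lemma le_iff: "x \<in> V \<Longrightarrow> y \<in> V \<Longrightarrow> le x y \<longleftrightarrow> (x = y \<or> hi x \<le> lo y)"
proof -
  assume x: "x \<in> V" and y: "y \<in> V"
  show ?thesis
  proof (cases "x = y")
    case True thus ?thesis using po_refl[OF po x] by simp
  next
    case False
    have TR: "u (hi x) \<in> R" using T[OF x] unfolding R_def by (metis image_eqI)
    have "le x y \<longleftrightarrow> le (u (hi x)) (u (lo y))" using le_T2[OF x y False] le_B[OF TR y] by simp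
    also have "\<dots> \<longleftrightarrow> hi x \<le> lo y" using u_le T[OF x] B[OF y] by blast
    finally show ?thesis using False by simp
  qed
qed

lemma lo_lt_hi: "x \<in> D \<Longrightarrow> lo x < hi x"
proof -
  assume xD: "x \<in> D"
  have x: "x \<in> V" "x \<notin> R" using xD D_def by auto
  have a: "covers V le (Pc x) x" "covers V le x (Qc x)" using Pc[OF xD] Qc[OF xD] .
  have PQ: "Pc x \<in> V" "Qc x \<in> V" "le (Pc x) x" "le x (Qc x)" "Pc x \<noteq> x" "Qc x \<noteq> x" using a unfolding covers_def by auto
  have "le (u (lo x)) (u (hi x))" using B[OF x(1)] T[OF x(1)] x(2) po_trans[OF po PQ(1) x(1) PQ(2)] PQ by simp
  hence "lo x \<le> hi x" using u_le B[OF x(1)] T[OF x(1)] by blast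
  moreover have "lo x \<noteq> hi x"
  proof
    assume "lo x = hi x"
    hence "Pc x = Qc x" using B[OF x(1)] T[OF x(1)] x(2) by auto
    thus False using po_antisym[OF po PQ(1) x(1)] PQ by auto
  qed
  ultimately show ?thesis by simp
qed

lemma model: "model V le n lo hi u"
proof
  show "finite V" by (rule fin)
  show "1 \<le> n" using n2 by simp
  show "\<And>k. 1 \<le> k \<Longrightarrow> k \<le> n \<Longrightarrow> u k \<in> V" using uV by auto
  show "\<And>k. 1 \<le> k \<Longrightarrow> k \<le> n \<Longrightarrow> lo (u k) = k" using lo_u by auto
  show "\<And>k. 1 \<le> k \<Longrightarrow> k \<le> n \<Longrightarrow> hi (u k) = k" using hi_u by auto
  show "\<And>x. x \<in> V \<Longrightarrow> 1 \<le> lo x \<and> lo x \<le> hi x \<and> hi x \<le> n"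
  proof -
    fix x assume x: "x \<in> V"
    show "1 \<le> lo x \<and> lo x \<le> hi x \<and> hi x \<le> n"
    proof (cases "x \<in> R")
      case True thus ?thesis unfolding lo_def hi_def using idx_R by auto
    next
      case False thus ?thesis using lo_lt_hi[of x] x B[OF x] T[OF x] D_def by auto
    qed
  qed
  show "\<And>x. x \<in> V \<Longrightarrow> lo x = hi x \<Longrightarrow> x = u (lo x)"
  proof -
    fix x assume x: "x \<in> V" and e: "lo x = hi x"
    show "x = u (lo x)"
    proof (cases "x \<in> R")
      case True thus ?thesis using B[OF x] by simp
    next
      case False thus ?thesis using lo_lt_hi[of x] x e D_def by auto
    qed
  qed
  show "\<And>x y. x \<in> V \<Longrightarrow> y \<in> V \<Longrightarrow> le x y \<longleftrightarrow> (x = y \<or> hi x \<le> lo y)" by (rule le_iff)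
qed

end



lemma adj_fold_snoc: "adj_fold le L (xs @ [(a, b, C)]) = adjunct (adj_fold le L xs) a b (C, le)"
proof (induction xs arbitrary: L)
  case Nil thus ?case by simp
next
  case (Cons x xs)
  obtain a' b' C' where x: "x = (a', b', C')" by (cases x)
  show ?case using Cons x by simp
qed

lemma adj_valid_app: "adj_valid le L (xs @ ys) \<longleftrightarrow> adj_valid le L xs \<and> adj_valid le (adj_fold le L xs) ys"
proof (induction xs arbitrary: L)
  case Nil thus ?case by simp
next
  case (Cons x xs)
  obtain a' b' C' where x: "x = (a', b', C')" by (cases x)
  show ?case using Cons x by simp
qed

lemma adj_fold_app: "adj_fold le L (xs @ ys) = adj_fold le (adj_fold le L xs) ys"
proof (induction xs arbitrary: L)
  case Nil thus ?case by simp
next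
  case (Cons x xs)
  obtain a' b' C' where x: "x = (a', b', C')" by (cases x)
  show ?case using Cons x by simp
qed

lemma adj_fold_fst_mono: "fst L \<subseteq> fst (adj_fold le L xs)"
proof (induction xs arbitrary: L)
  case Nil thus ?case by simp
next
  case (Cons x xs)
  obtain a' b' C' where x: "x = (a', b', C')" by (cases x)
  have "fst L \<subseteq> fst (adjunct L a' b' (C', le))" unfolding adjunct_def by auto
  thus ?case using Cons.IH[of "adjunct L a' b' (C', le)"] x by auto
qed

lemma adjunct_snd_keep:
  assumes "adjunct_ok L1 a b L2" "x \<in> fst L1" "y \<in> fst L1"
  shows "snd (adjunct L1 a b L2) x y = snd L1 x y"
  using assms unfolding adjunct_ok_def adjunct_def by auto

lemma adj_fold_snd: "adj_valid le L xs \<Longrightarrow> x \<in> fst L \<Longrightarrow> y \<in> fst L \<Longrightarrow> snd (adj_fold le L xs) x y = snd L x y"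
proof (induction xs arbitrary: L)
  case Nil thus ?case by simp
next
  case (Cons p xs)
  obtain a' b' C' where p: "p = (a', b', C')" by (cases p)
  have ok: "adjunct_ok L a' b' (C', le)" and v: "adj_valid le (adjunct L a' b' (C', le)) xs"
    using Cons.prems p by auto
  have m: "x \<in> fst (adjunct L a' b' (C', le))" "y \<in> fst (adjunct L a' b' (C', le))"
    using Cons.prems unfolding adjunct_def by auto
  show ?case using Cons.IH[OF v m] adjunct_snd_keep[OF ok Cons.prems(2,3)] p by simp
qed

locale rep =
  fixes V :: "'a set" and le :: "'a \<Rightarrow> 'a \<Rightarrow> bool" and C0 :: "'a set" and ps :: "('a \<times> 'a \<times> 'a set) list"
  assumes ar: "adjunct_rep V le C0 ps"
  and dist: "distinct (map (\<lambda>(a, b, C). (a, b)) ps)"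
  and po: "po_on V le"
begin

definition Lf where "Lf k = adj_fold le (C0, le) (take k ps)"
definition Ls where "Ls k = fst (Lf k)"
definition A where "A k = fst (ps ! k)"
definition B where "B k = fst (snd (ps ! k))"
definition Cs where "Cs k = snd (snd (ps ! k))"

lemma psk: "ps ! k = (A k, B k, Cs k)" unfolding A_def B_def Cs_def by simp

lemma valid: "adj_valid le (C0, le) ps" using ar unfolding adjunct_rep_def by auto
lemma final_fst: "Ls (length ps) = V" using ar unfolding adjunct_rep_def Ls_def Lf_def by auto
lemma final_snd: "x \<in> V \<Longrightarrow> y \<in> V \<Longrightarrow> snd (Lf (length ps)) x y = le x y"
  using ar unfolding adjunct_rep_def Lf_def by auto

lemma Ls0: "Ls 0 = C0" unfolding Ls_def Lf_def by simp

lemma Lf_Suc: "k < length ps \<Longrightarrow> Lf (Suc k) = adjunct (Lf k) (A k) (B k) (Cs k, le)"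
  unfolding Lf_def using take_Suc_conv_app_nth[of k ps] psk[of k] adj_fold_snoc by metis

lemma Ls_Suc: "k < length ps \<Longrightarrow> Ls (Suc k) = Ls k \<union> Cs k"
  unfolding Ls_def using Lf_Suc unfolding adjunct_def by simp

lemma ok: "k < length ps \<Longrightarrow> adjunct_ok (Lf k) (A k) (B k) (Cs k, le)"
proof -
  assume k: "k < length ps"
  have "adj_valid le (C0, le) (take (Suc k) ps)" using valid adj_valid_app[of le "(C0, le)" "take (Suc k) ps" "drop (Suc k) ps"] by simp
  hence "adj_valid le (C0, le) (take k ps @ [(A k, B k, Cs k)])"
    using take_Suc_conv_app_nth[OF k] psk[of k] by metis
  thus ?thesis unfolding Lf_def by (simp add: adj_valid_app)
qed

lemma Ls_mono: "k \<le> k' \<Longrightarrow> Ls k \<subseteq> Ls k'"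
proof -
  assume "k \<le> k'"
  then obtain d where "k' = k + d" using le_Suc_ex by blast
  hence "take k' ps = take k ps @ take d (drop k ps)" by (simp add: take_add)
  thus ?thesis unfolding Ls_def Lf_def using adj_fold_app adj_fold_fst_mono by metis
qed

lemma LsV: "Ls k \<subseteq> V"
proof (cases "k \<le> length ps")
  case True thus ?thesis using Ls_mono final_fst by blast
next
  case False thus ?thesis unfolding Ls_def Lf_def using final_fst unfolding Ls_def Lf_def by simp
qed

lemma ord: "x \<in> Ls k \<Longrightarrow> y \<in> Ls k \<Longrightarrow> snd (Lf k) x y = le x y"
proof -
  assume x: "x \<in> Ls k" and y: "y \<in> Ls k"
  have xy: "x \<in> V" "y \<in> V" using x y LsV by auto
  have "ps = take k ps @ drop k ps" by simp
  hence v: "adj_valid le (Lf k) (drop k ps)" using valid adj_valid_app unfolding Lf_def by metis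
  have eq: "Lf (length ps) = adj_fold le (Lf k) (drop k ps)" unfolding Lf_def using adj_fold_app[of le "(C0, le)" "take k ps" "drop k ps"] by simp
  have "snd (Lf (length ps)) x y = snd (Lf k) x y" using adj_fold_snd[OF v] x y eq unfolding Ls_def by simp
  thus ?thesis using final_snd[OF xy] by simp
qed

lemma ABC: "k < length ps \<Longrightarrow> A k \<in> Ls k \<and> B k \<in> Ls k \<and> A k \<noteq> B k \<and> le (A k) (B k) \<and> Ls k \<inter> Cs k = {}"
  using ok[of k] ord[of "A k" k "B k"] unfolding adjunct_ok_def Ls_def by auto

lemma CsV: "k < length ps \<Longrightarrow> Cs k \<subseteq> V"
  using Ls_Suc[of k] LsV[of "Suc k"] by auto

lemma Cs_chain: "k < length ps \<Longrightarrow> x \<in> Cs k \<Longrightarrow> y \<in> Cs k \<Longrightarrow> le x y \<or> le y x"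
proof -
  assume k: "k < length ps" and xy: "x \<in> Cs k" "y \<in> Cs k"
  have "ps ! k \<in> set ps" using k by simp
  hence "is_chain V le (Cs k)" using ar psk[of k] unfolding adjunct_rep_def by fastforce
  thus ?thesis using xy unfolding is_chain_def by auto
qed

lemma C0_chain: "x \<in> C0 \<Longrightarrow> y \<in> C0 \<Longrightarrow> le x y \<or> le y x"
  using ar unfolding adjunct_rep_def maximal_chain_def is_chain_def by auto

lemma H4:
  assumes k: "k < length ps" and x: "x \<in> Ls k" and c: "c \<in> Cs k"
  shows "le x c \<longleftrightarrow> le x (A k)" "le c x \<longleftrightarrow> le (B k) x"
proof -
  have abc: "A k \<in> Ls k" "B k \<in> Ls k" "Ls k \<inter> Cs k = {}" using ABC[OF k] by auto
  have m: "x \<in> Ls (Suc k)" "c \<in> Ls (Suc k)" using Ls_Suc[OF k] x c by auto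
  have cn: "c \<notin> Ls k" using abc c by auto
  have xn: "x \<notin> Cs k" using abc x by auto
  have "le x c = snd (Lf (Suc k)) x c" using ord[OF m] by simp
  also have "\<dots> = snd (Lf k) x (A k)" using Lf_Suc[OF k] x cn xn c unfolding adjunct_def Ls_def by auto
  also have "\<dots> = le x (A k)" using ord[OF x abc(1)] .
  finally show "le x c \<longleftrightarrow> le x (A k)" .
  have "le c x = snd (Lf (Suc k)) c x" using ord[OF m(2,1)] by simp
  also have "\<dots> = snd (Lf k) (B k) x" using Lf_Suc[OF k] x cn xn c unfolding adjunct_def Ls_def by auto
  also have "\<dots> = le (B k) x" using ord[OF abc(2) x] .
  finally show "le c x \<longleftrightarrow> le (B k) x" .
qed

lemma pair_inj: "i < length ps \<Longrightarrow> j < length ps \<Longrightarrow> A i = A j \<Longrightarrow> B i = B j \<Longrightarrow> i = j"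
proof -
  assume ij: "i < length ps" "j < length ps" "A i = A j" "B i = B j"
  have "map (\<lambda>(a, b, C). (a, b)) ps ! i = map (\<lambda>(a, b, C). (a, b)) ps ! j"
    using ij psk[of i] psk[of j] by simp
  thus ?thesis using dist ij nth_eq_iff_index_eq by fastforce
qed

definition stage where "stage x = (LEAST k. x \<in> Ls k)"

lemma stage_in: "x \<in> V \<Longrightarrow> x \<in> Ls (stage x) \<and> stage x \<le> length ps"
proof -
  assume x: "x \<in> V"
  hence ex: "x \<in> Ls (length ps)" using final_fst by simp
  show ?thesis unfolding stage_def using LeastI[of "\<lambda>k. x \<in> Ls k", OF ex] Least_le[of "\<lambda>k. x \<in> Ls k", OF ex] by simp
qed

lemma in_Ls_iff: "x \<in> V \<Longrightarrow> x \<in> Ls k \<longleftrightarrow> stage x \<le> k"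
  using stage_in Ls_mono unfolding stage_def by (meson Least_le subsetD)

lemma stage_Suc: "x \<in> V \<Longrightarrow> stage x = Suc t \<Longrightarrow> t < length ps \<and> x \<in> Cs t \<and> x \<notin> Ls t"
proof -
  assume x: "x \<in> V" and s: "stage x = Suc t"
  have t: "t < length ps" using stage_in[OF x] s by simp
  have "x \<notin> Ls t" using in_Ls_iff[OF x, of t] s by simp
  moreover have "x \<in> Ls (Suc t)" using stage_in[OF x] s by simp
  ultimately show ?thesis using Ls_Suc[OF t] t by auto
qed

end



context rep begin

definition Iv where "Iv a b = {x \<in> V. le a x \<and> le x b \<and> x \<noteq> a \<and> x \<noteq> b}"
definition iso where "iso a b v \<longleftrightarrow> v \<in> Iv a b \<and> (\<forall>z\<in>Iv a b. z \<noteq> v \<longrightarrow> \<not> le z v \<and> \<not> le v z)"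

lemma refl': "x \<in> V \<Longrightarrow> le x x" using po unfolding po_on_def by blast
lemma trans': "x \<in> V \<Longrightarrow> y \<in> V \<Longrightarrow> z \<in> V \<Longrightarrow> le x y \<Longrightarrow> le y z \<Longrightarrow> le x z"
  using po unfolding po_on_def by blast
lemma antisym': "x \<in> V \<Longrightarrow> y \<in> V \<Longrightarrow> le x y \<Longrightarrow> le y x \<Longrightarrow> x = y"
  using po unfolding po_on_def by blast

lemma F1:
  assumes a: "a \<in> V" and b: "b \<in> V" and x: "x \<in> Iv a b" and st: "stage x = Suc t"
    and sa: "stage a \<le> t" and sb: "stage b \<le> t"
    and nc: "\<forall>y\<in>Iv a b \<inter> Ls t. \<not> le y x \<and> \<not> le x y"
  shows "A t = a \<and> B t = b"
proof -
  have xI: "x \<in> V" "le a x" "le x b" "x \<noteq> a" "x \<noteq> b" using x unfolding Iv_def by auto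
  have t: "t < length ps" and xC: "x \<in> Cs t" and xn: "x \<notin> Ls t" using stage_Suc[OF xI(1) st] by auto
  have aL: "a \<in> Ls t" and bL: "b \<in> Ls t" using in_Ls_iff a b sa sb by auto
  have AB: "A t \<in> Ls t" "B t \<in> Ls t" using ABC[OF t] by auto
  have ABV: "A t \<in> V" "B t \<in> V" using AB LsV by auto
  have aA: "le a (A t)" using H4(1)[OF t aL xC] xI by simp
  have Ax: "le (A t) x" using H4(1)[OF t AB(1) xC] refl'[OF ABV(1)] by simp
  have Ab: "le (A t) b" using trans'[OF ABV(1) xI(1) b Ax xI(3)] .
  have "A t \<noteq> b" using antisym'[OF xI(1) b xI(3)] Ax xI by auto
  moreover have "A t \<noteq> a \<Longrightarrow> False"
  proof -
    assume "A t \<noteq> a"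
    hence "A t \<in> Iv a b \<inter> Ls t" using \<open>A t \<noteq> b\<close> aA Ab ABV AB unfolding Iv_def by auto
    thus False using nc Ax by blast
  qed
  moreover have Bb: "le (B t) b" using H4(2)[OF t bL xC] xI by simp
  have xB: "le x (B t)" using H4(2)[OF t AB(2) xC] refl'[OF ABV(2)] by simp
  have aB: "le a (B t)" using trans'[OF a xI(1) ABV(2) xI(2) xB] .
  have "B t \<noteq> a" using antisym'[OF a xI(1) xI(2)] xB xI by auto
  moreover have "B t \<noteq> b \<Longrightarrow> False"
  proof -
    assume "B t \<noteq> b"
    hence "B t \<in> Iv a b \<inter> Ls t" using \<open>B t \<noteq> a\<close> aB Bb ABV AB unfolding Iv_def by auto
    thus False using nc xB by blast
  qed
  ultimately show ?thesis by blast
qed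

lemma not_iso_comp: "v \<in> Iv a b \<Longrightarrow> y \<in> Iv a b \<Longrightarrow> y \<noteq> v \<Longrightarrow> le v y \<or> le y v \<Longrightarrow> \<not> iso a b v"
  unfolding iso_def by blast

lemma not_iso_hub: "v \<in> Iv a b \<Longrightarrow> y \<in> Iv a b \<Longrightarrow> y \<noteq> v \<Longrightarrow> h \<in> Iv a b \<Longrightarrow>
   (le v h \<or> le h v) \<Longrightarrow> (le y h \<or> le h y) \<Longrightarrow> \<not> iso a b v"
  unfolding iso_def by metis

lemma F2:
  assumes a: "a \<in> V" and b: "b \<in> V" and ab: "le a b" "a \<noteq> b"
    and v: "v \<in> Iv a b \<inter> Ls (max (stage a) (stage b))"
    and y: "y \<in> Iv a b \<inter> Ls (max (stage a) (stage b))" and yv: "y \<noteq> v"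
  shows "\<not> iso a b v"
proof (cases "max (stage a) (stage b)")
  case 0
  hence "v \<in> C0" "y \<in> C0" using v y Ls0 by auto
  thus ?thesis using C0_chain not_iso_comp v y yv by blast
next
  case (Suc t)
  have sa: "stage a \<le> Suc t" "stage b \<le> Suc t" using Suc by auto
  have nt: "\<not> (stage a \<le> t \<and> stage b \<le> t)" using Suc by auto
  have t: "t < length ps" using stage_in a b Suc by (metis max_def Suc_le_lessD)
  have "a \<in> Ls (Suc t)" "b \<in> Ls (Suc t)" using in_Ls_iff[OF a, of "Suc t"] in_Ls_iff[OF b, of "Suc t"] sa by auto
  hence aS: "a \<in> Ls t \<union> Cs t" "b \<in> Ls t \<union> Cs t" using Ls_Suc[OF t] by auto
  have vS: "v \<in> Ls t \<union> Cs t" "y \<in> Ls t \<union> Cs t" using v y Ls_Suc[OF t] Suc by auto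
  have vV: "v \<in> V" "le a v" "le v b" "v \<noteq> a" "v \<noteq> b" and yV: "y \<in> V" "le a y" "le y b" "y \<noteq> a" "y \<noteq> b"
    using v y unfolding Iv_def by auto
  have AB: "A t \<in> Ls t" "B t \<in> Ls t" "A t \<noteq> B t" "le (A t) (B t)" "Ls t \<inter> Cs t = {}" using ABC[OF t] by auto
  have ABV: "A t \<in> V" "B t \<in> V" using AB LsV by auto
  have chain_case: "\<not> iso a b v" if e: "Iv a b \<inter> Ls t = {}"
  proof -
    have "v \<in> Cs t" "y \<in> Cs t" using vS e v y by auto
    thus ?thesis using Cs_chain[OF t] not_iso_comp v y yv by blast
  qed
  consider (both) "a \<in> Cs t" "b \<in> Cs t" | (left) "a \<in> Ls t" "b \<in> Cs t" | (right) "a \<in> Cs t" "b \<in> Ls t"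
    using aS nt in_Ls_iff[OF a] in_Ls_iff[OF b] by blast
  thus ?thesis
  proof cases
    case both
    have "Iv a b \<inter> Ls t = {}"
    proof (rule ccontr)
      assume "Iv a b \<inter> Ls t \<noteq> {}"
      then obtain z where z: "z \<in> Iv a b" "z \<in> Ls t" by blast
      have zV: "z \<in> V" "le a z" "le z b" using z unfolding Iv_def by auto
      have "le (B t) z" using H4(2)[OF t z(2) both(1)] zV by simp
      moreover have "le z (A t)" using H4(1)[OF t z(2) both(2)] zV by simp
      ultimately have "le (B t) (A t)" using trans'[OF ABV(2) zV(1) ABV(1)] by blast
      thus False using antisym'[OF ABV] AB by auto
    qed
    thus ?thesis by (rule chain_case)
  next
    case left
    have aA: "le a (A t)" using H4(1)[OF t left(1) left(2)] ab by simp
    have Ab: "le (A t) b" using H4(1)[OF t AB(1) left(2)] refl'[OF ABV(1)] by simp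
    have Anb: "A t \<noteq> b" using AB left by auto
    show ?thesis
    proof (cases "A t = a")
      case True
      have "Iv a b \<inter> Ls t = {}"
      proof (rule ccontr)
        assume "Iv a b \<inter> Ls t \<noteq> {}"
        then obtain z where z: "z \<in> Iv a b" "z \<in> Ls t" by blast
        have zV: "z \<in> V" "le a z" "le z b" "z \<noteq> a" using z unfolding Iv_def by auto
        have "le z (A t)" using H4(1)[OF t z(2) left(2)] zV by simp
        thus False using antisym'[OF zV(1) a] True zV by auto
      qed
      thus ?thesis by (rule chain_case)
    next
      case False
      have hI: "A t \<in> Iv a b" using False Anb aA Ab ABV unfolding Iv_def by auto
      have comp: "le z (A t) \<or> le (A t) z" if z: "z \<in> Iv a b" "z \<in> Ls t \<union> Cs t" for z
      proof -
        have zV: "z \<in> V" "le z b" using z unfolding Iv_def by auto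
        show ?thesis
        proof (cases "z \<in> Ls t")
          case True thus ?thesis using H4(1)[OF t True left(2)] zV by simp
        next
          case False
          hence "z \<in> Cs t" using z by auto
          thus ?thesis using H4(1)[OF t AB(1)] refl'[OF ABV(1)] by simp
        qed
      qed
      show ?thesis using not_iso_hub[OF _ _ yv hI] comp v y vS by blast
    qed
  next
    case right
    have Bb: "le (B t) b" using H4(2)[OF t right(2) right(1)] ab by simp
    have aB: "le a (B t)" using H4(2)[OF t AB(2) right(1)] refl'[OF ABV(2)] by simp
    have Bna: "B t \<noteq> a" using AB right by auto
    show ?thesis
    proof (cases "B t = b")
      case True
      have "Iv a b \<inter> Ls t = {}"
      proof (rule ccontr)
        assume "Iv a b \<inter> Ls t \<noteq> {}"
        then obtain z where z: "z \<in> Iv a b" "z \<in> Ls t" by blast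
        have zV: "z \<in> V" "le a z" "le z b" "z \<noteq> b" using z unfolding Iv_def by auto
        have "le (B t) z" using H4(2)[OF t z(2) right(1)] zV by simp
        thus False using antisym'[OF zV(1) b] True zV by auto
      qed
      thus ?thesis by (rule chain_case)
    next
      case False
      have hI: "B t \<in> Iv a b" using False Bna aB Bb ABV unfolding Iv_def by auto
      have comp: "le z (B t) \<or> le (B t) z" if z: "z \<in> Iv a b" "z \<in> Ls t \<union> Cs t" for z
      proof -
        have zV: "z \<in> V" "le a z" using z unfolding Iv_def by auto
        show ?thesis
        proof (cases "z \<in> Ls t")
          case True thus ?thesis using H4(2)[OF t True right(1)] zV by simp
        next
          case False
          hence "z \<in> Cs t" using z by auto
          thus ?thesis using H4(2)[OF t AB(2)] refl'[OF ABV(2)] by simp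
        qed
      qed
      show ?thesis using not_iso_hub[OF _ _ yv hI] comp v y vS by blast
    qed
  qed
qed

lemma G1:
  assumes a: "a \<in> V" and b: "b \<in> V" and v: "iso a b v" and s: "max (stage a) (stage b) < stage v"
  shows "\<exists>t. stage v = Suc t \<and> A t = a \<and> B t = b"
proof -
  obtain t where t: "stage v = Suc t" using s by (cases "stage v") auto
  have vI: "v \<in> Iv a b" "v \<in> V" using v unfolding iso_def Iv_def by auto
  have vn: "v \<notin> Ls t" using stage_Suc[OF vI(2) t] by auto
  have "\<forall>y\<in>Iv a b \<inter> Ls t. \<not> le y v \<and> \<not> le v y" using v vn unfolding iso_def by auto
  thus ?thesis using F1[OF a b vI(1) t] s t by auto
qed

lemma iso3:
  assumes a: "a \<in> V" and b: "b \<in> V" and ab: "le a b" "a \<noteq> b"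
    and v1: "iso a b v1" and v2: "iso a b v2" and v12: "v1 \<noteq> v2"
    and w: "w \<in> Iv a b" "w \<noteq> v1" "w \<noteq> v2"
  shows False
proof -
  let ?T = "max (stage a) (stage b)"
  have vI: "v1 \<in> Iv a b" "v2 \<in> Iv a b" "v1 \<in> V" "v2 \<in> V" using v1 v2 unfolding iso_def Iv_def by auto
  have wV: "w \<in> V" using w unfolding Iv_def by auto
  have same: "\<And>x y t. x \<in> V \<Longrightarrow> y \<in> V \<Longrightarrow> stage x = Suc t \<Longrightarrow> stage y = Suc t \<Longrightarrow> le x y \<or> le y x"
    using stage_Suc Cs_chain by blast
  have late_uniq: "\<And>x y. iso a b x \<Longrightarrow> y \<in> Iv a b \<Longrightarrow> y \<noteq> x \<Longrightarrow> ?T < stage x \<Longrightarrow> ?T < stage y \<Longrightarrow>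
        (\<forall>z\<in>Iv a b \<inter> Ls (stage y - 1). \<not> le z y \<and> \<not> le y z) \<Longrightarrow> False"
  proof -
    fix x y assume x: "iso a b x" and y: "y \<in> Iv a b" "y \<noteq> x" and sx: "?T < stage x" and sy: "?T < stage y"
      and nc: "\<forall>z\<in>Iv a b \<inter> Ls (stage y - 1). \<not> le z y \<and> \<not> le y z"
    obtain tx where tx: "stage x = Suc tx" "A tx = a" "B tx = b" using G1[OF a b x sx] by blast
    obtain ty where ty: "stage y = Suc ty" using sy by (cases "stage y") auto
    have yV: "y \<in> V" using y unfolding Iv_def by auto
    have "A ty = a \<and> B ty = b" using F1[OF a b y(1) ty] sy ty nc by auto
    moreover have "tx < length ps" "ty < length ps" using stage_Suc tx ty yV x unfolding iso_def Iv_def by auto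
    ultimately have "tx = ty" using pair_inj tx by metis
    hence "le x y \<or> le y x" using same[of x y] tx ty yV x unfolding iso_def Iv_def by auto
    thus False using x y unfolding iso_def by blast
  qed
  have main: "False" if v1e: "stage v1 \<le> ?T" and v1: "iso a b v1" and v2: "iso a b v2"
    and vI: "v1 \<in> Iv a b" "v2 \<in> Iv a b" "v1 \<in> V" "v2 \<in> V" and v12: "v1 \<noteq> v2"
    and w: "w \<in> Iv a b" "w \<noteq> v1" "w \<noteq> v2" for v1 v2
  proof -
    have v1L: "v1 \<in> Ls ?T" using in_Ls_iff[OF vI(3)] v1e by simp
    have only: "\<And>y. y \<in> Iv a b \<inter> Ls ?T \<Longrightarrow> y = v1"
      using F2[OF a b ab _ _ ] v1 v1L vI by blast
    have s2: "?T < stage v2"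
    proof (rule ccontr)
      assume "\<not> ?T < stage v2"
      hence "stage v2 \<le> ?T" by (simp only: not_less)
      hence "v2 \<in> Ls ?T" using in_Ls_iff[OF vI(4)] by blast
      thus False using only vI v12 by auto
    qed
    define E where "E = {x \<in> Iv a b. x \<noteq> v1 \<and> x \<noteq> v2}"
    have "w \<in> E" using w unfolding E_def by auto
    then obtain x where xE: "x \<in> E" and xmin: "\<And>y. y \<in> E \<Longrightarrow> stage x \<le> stage y"
      using ex_has_least_nat[of "\<lambda>x. x \<in> E" w stage] by blast
    have xI: "x \<in> Iv a b" "x \<noteq> v1" "x \<noteq> v2" "x \<in> V" using xE unfolding E_def Iv_def by auto
    have sx: "?T < stage x"
    proof (rule ccontr)
      assume "\<not> ?T < stage x"
      hence "stage x \<le> ?T" by (simp only: not_less)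
      hence "x \<in> Ls ?T" using in_Ls_iff[OF xI(4)] by blast
      thus False using only xI by auto
    qed
    have nc: "\<forall>z\<in>Iv a b \<inter> Ls (stage x - 1). \<not> le z x \<and> \<not> le x z"
    proof (intro ballI)
      fix z assume z: "z \<in> Iv a b \<inter> Ls (stage x - 1)"
      have zV: "z \<in> V" using z unfolding Iv_def by auto
      have szl: "stage z < stage x" using in_Ls_iff[OF zV] z sx by auto
      show "\<not> le z x \<and> \<not> le x z"
      proof (cases "z = v1 \<or> z = v2")
        case True thus ?thesis using v1 v2 xI unfolding iso_def by auto
      next
        case False
        hence "z \<in> E" using z unfolding E_def by auto
        thus ?thesis using xmin szl by fastforce
      qed
    qed
    show False using late_uniq[OF v2 xI(1) xI(3) s2 sx nc] .
  qed
  show False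
  proof (cases "stage v1 \<le> ?T")
    case True thus ?thesis using main[OF True v1 v2 vI v12 w] by blast
  next
    case f1: False
    show ?thesis
    proof (cases "stage v2 \<le> ?T")
      case True thus ?thesis using main[OF True v2 v1 vI(2,1,4,3) v12[symmetric] w(1,3,2)] by blast
    next
      case False
      have "\<forall>z\<in>Iv a b \<inter> Ls (stage v1 - 1). \<not> le z v1 \<and> \<not> le v1 z"
      proof
        fix z assume z: "z \<in> Iv a b \<inter> Ls (stage v1 - 1)"
        have "z \<noteq> v1" using z in_Ls_iff[OF vI(3)] f1 by auto
        thus "\<not> le z v1 \<and> \<not> le v1 z" using v1 z unfolding iso_def by auto
      qed
      moreover have "?T < stage v2" "?T < stage v1" using f1 False by (simp_all only: not_le)
      ultimately show False using late_uniq[OF v2 vI(1) v12] by blast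
    qed
  qed
qed

end



locale main = fbb V le n u for V :: "'a set" and le n u +
  fixes C0 :: "'a set" and ps :: "('a \<times> 'a \<times> 'a set) list"
  assumes ar: "adjunct_rep V le C0 ps"
  and dist: "distinct (map (\<lambda>(a, b, C). (a, b)) ps)"
begin

sublocale Rp: rep V le C0 ps using ar dist po by unfold_locales
sublocale M: model V le n lo hi u by (rule model)

lemma D_V: "v \<in> D \<Longrightarrow> v \<in> V" unfolding D_def by auto
lemma D_lt: "v \<in> D \<Longrightarrow> lo v < hi v" by (rule lo_lt_hi)
lemma R_eq: "x \<in> V \<Longrightarrow> x \<in> R \<longleftrightarrow> lo x = hi x"
proof
  assume "x \<in> V"  "x \<in> R"
  then obtain k where "k \<in> {1..n}" "x = u k" unfolding R_def by auto
  thus "lo x = hi x" using lo_u hi_u by simp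
next
  assume "x \<in> V" "lo x = hi x"
  thus "x \<in> R" using lo_lt_hi[of x] unfolding D_def by auto
qed
lemma rngD: "v \<in> D \<Longrightarrow> 1 \<le> lo v \<and> lo v < hi v \<and> hi v \<le> n"
  using M.rng[OF D_V] D_lt by fastforce

lemma uR: "k \<in> {1..n} \<Longrightarrow> u k \<in> R" unfolding R_def by auto

lemma iso_D: assumes vD: "v \<in> D" shows "Rp.iso (u (lo v)) (u (hi v)) v"
proof -
  have v: "v \<in> V" using D_V[OF vD] .
  have r: "1 \<le> lo v" "lo v < hi v" "hi v \<le> n" using rngD[OF vD] by auto
  have lk: "lo v \<in> {1..n}" "hi v \<in> {1..n}" using r by auto
  have ua: "u (lo v) \<in> V" "u (hi v) \<in> V" using uV lk by auto
  have vne: "v \<noteq> u (lo v)" "v \<noteq> u (hi v)" using vD uR[OF lk(1)] uR[OF lk(2)] unfolding D_def by auto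
  have "le (u (lo v)) v" "le v (u (hi v))" using M.le_u_lo[OF v] M.le_u_hi[OF v] by auto
  hence vI: "v \<in> Rp.Iv (u (lo v)) (u (hi v))" unfolding Rp.Iv_def using v vne by auto
  have "\<not> le z v \<and> \<not> le v z" if z: "z \<in> Rp.Iv (u (lo v)) (u (hi v))" "z \<noteq> v" for z
  proof -
    have zV: "z \<in> V" "le (u (lo v)) z" "le z (u (hi v))" "z \<noteq> u (lo v)" "z \<noteq> u (hi v)"
      using z unfolding Rp.Iv_def by auto
    have a: "lo v \<le> lo z" using M.le_iff[OF ua(1) zV(1)] zV hi_u[OF lk(1)] by auto
    have b: "hi z \<le> hi v" using M.le_iff[OF zV(1) ua(2)] zV lo_u[OF lk(2)] by auto
    have zr: "lo z \<le> hi z" using M.rng[OF zV(1)] by auto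
    have "\<not> le z v"
    proof
      assume "le z v"
      hence "hi z \<le> lo v" using M.le_iff[OF zV(1) v] z(2) by auto
      hence "lo z = lo v" "lo z = hi z" using a zr by auto
      thus False using M.eq_u[OF zV(1)] zV(4) by auto
    qed
    moreover have "\<not> le v z"
    proof
      assume "le v z"
      hence "hi v \<le> lo z" using M.le_iff[OF v zV(1)] z(2) by auto
      hence "lo z = hi v" "lo z = hi z" using b zr by auto
      thus False using M.eq_u[OF zV(1)] zV(5) by auto
    qed
    ultimately show ?thesis by simp
  qed
  thus ?thesis unfolding Rp.iso_def using vI by blast
qed

lemma FB1:
  assumes v: "v \<in> D" and w: "w \<in> D" and t: "lo w = lo v" "hi w = hi v" and far: "Suc (lo v) < hi v"
  shows "v = w"
proof (rule ccontr)
  assume vw: "v \<noteq> w"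
  have r: "1 \<le> lo v" "lo v < hi v" "hi v \<le> n" using rngD[OF v] by auto
  have lk: "lo v \<in> {1..n}" "hi v \<in> {1..n}" "Suc (lo v) \<in> {1..n}" using r far by auto
  have ua: "u (lo v) \<in> V" "u (hi v) \<in> V" using uV lk by auto
  have ab: "le (u (lo v)) (u (hi v))" "u (lo v) \<noteq> u (hi v)" using u_le[OF lk(1) lk(2)] r u_inj[OF lk(1) lk(2)] by auto
  have wI: "u (Suc (lo v)) \<in> Rp.Iv (u (lo v)) (u (hi v))"
    unfolding Rp.Iv_def using uV[OF lk(3)] u_le[OF lk(1) lk(3)] u_le[OF lk(3) lk(2)] far u_inj[OF lk(3) lk(1)] u_inj[OF lk(3) lk(2)] by auto
  have ne: "u (Suc (lo v)) \<noteq> v" "u (Suc (lo v)) \<noteq> w" using v w uR[OF lk(3)] unfolding D_def by auto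
  show False using Rp.iso3[OF ua ab iso_D[OF v] _ vw wI ne] iso_D[OF w] t by simp
qed

lemma FB2:
  assumes v1: "v1 \<in> D" and v2: "v2 \<in> D" and v3: "v3 \<in> D"
    and t: "lo v2 = lo v1" "hi v2 = hi v1" "lo v3 = lo v1" "hi v3 = hi v1"
    and d: "v1 \<noteq> v2" "v1 \<noteq> v3" "v2 \<noteq> v3"
  shows False
proof -
  have r: "1 \<le> lo v1" "lo v1 < hi v1" "hi v1 \<le> n" using rngD[OF v1] by auto
  have lk: "lo v1 \<in> {1..n}" "hi v1 \<in> {1..n}" using r by auto
  have ua: "u (lo v1) \<in> V" "u (hi v1) \<in> V" using uV lk by auto
  have ab: "le (u (lo v1)) (u (hi v1))" "u (lo v1) \<noteq> u (hi v1)" using u_le[OF lk(1) lk(2)] r u_inj[OF lk(1) lk(2)] by auto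
  have i2: "Rp.iso (u (lo v1)) (u (hi v1)) v2" using iso_D[OF v2] t by simp
  have w: "v3 \<in> Rp.Iv (u (lo v1)) (u (hi v1))" using iso_D[OF v3] t unfolding Rp.iso_def by simp
  show False using Rp.iso3[OF ua ab iso_D[OF v1] i2 d(1) w] d by auto
qed

lemma FB3:
  assumes v: "v \<in> D" and adj: "hi v = Suc (lo v)"
  shows "\<exists>w\<in>D. w \<noteq> v \<and> lo w = lo v \<and> hi w = hi v"
proof -
  have vV: "v \<in> V" "\<not> reducible V le v" using D_nonred[OF v] by auto
  obtain p q z where pq: "covers V le p v" "covers V le v q" and
    z: "z \<in> V" "z \<noteq> v" "z \<noteq> p" "z \<noteq> q" "le p z" "le z q" using di_struct[OF vV] by blast
  have p: "p = u (lo v)" using Pc_uniq[OF v pq(1)] B[OF vV(1)] v unfolding D_def by auto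
  have q: "q = u (hi v)" using Qc_uniq[OF v pq(2)] T[OF vV(1)] v unfolding D_def by auto
  have r: "1 \<le> lo v" "lo v < hi v" "hi v \<le> n" using rngD[OF v] by auto
  have lk: "lo v \<in> {1..n}" "hi v \<in> {1..n}" using r by auto
  have ua: "u (lo v) \<in> V" "u (hi v) \<in> V" using uV lk by auto
  have a: "lo v \<le> lo z" using M.le_iff[OF ua(1) z(1)] z p hi_u[OF lk(1)] by auto
  have b: "hi z \<le> hi v" using M.le_iff[OF z(1) ua(2)] z q lo_u[OF lk(2)] by auto
  have zr: "lo z \<le> hi z" using M.rng[OF z(1)] by auto
  have "lo z \<noteq> hi z"
  proof
    assume e: "lo z = hi z"
    hence "lo z = lo v \<or> lo z = hi v" using a b adj by auto
    thus False using M.eq_u[OF z(1) e] z p q by auto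
  qed
  hence zt: "lo z = lo v" "hi z = hi v" using a b zr adj by auto
  have "z \<in> D" using R_eq[OF z(1)] zt r z(1) unfolding D_def by auto
  thus ?thesis using zt z by blast
qed

end



fun cflo :: "cf_elem \<Rightarrow> nat" where
  "cflo (U i) = i" | "cflo (X i) = i" | "cflo (Cc i j) = i"
fun cfhi :: "cf_elem \<Rightarrow> nat" where
  "cfhi (U i) = i" | "cfhi (X i) = Suc i" | "cfhi (Cc i j) = j"

lemma cf_le_iff: "cf_le x y \<longleftrightarrow> (x = y \<or> cfhi x \<le> cflo y)"
  by (cases x; cases y) auto

lemma cf_fin: "finite (cf_carrier n)"
proof -
  have "cf_carrier n \<subseteq> U ` {..n} \<union> X ` {..n} \<union> (\<lambda>(i, j). Cc i j) ` ({..n} \<times> {..n})"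
    unfolding cf_carrier_def by auto
  thus ?thesis by (rule finite_subset) auto
qed

lemma cf_model: "1 \<le> n \<Longrightarrow> model (cf_carrier n) cf_le n cflo cfhi U"
proof
  assume n: "1 \<le> n"
  show "finite (cf_carrier n)" by (rule cf_fin)
  show "1 \<le> n" by (rule n)
  show "\<And>k. 1 \<le> k \<Longrightarrow> k \<le> n \<Longrightarrow> U k \<in> cf_carrier n" unfolding cf_carrier_def by auto
  show "\<And>k. 1 \<le> k \<Longrightarrow> k \<le> n \<Longrightarrow> cflo (U k) = k" by simp
  show "\<And>k. 1 \<le> k \<Longrightarrow> k \<le> n \<Longrightarrow> cfhi (U k) = k" by simp
  show "\<And>x. x \<in> cf_carrier n \<Longrightarrow> 1 \<le> cflo x \<and> cflo x \<le> cfhi x \<and> cfhi x \<le> n"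
    unfolding cf_carrier_def by auto
  show "\<And>x. x \<in> cf_carrier n \<Longrightarrow> cflo x = cfhi x \<Longrightarrow> x = U (cflo x)"
    unfolding cf_carrier_def by auto
  show "\<And>x y. x \<in> cf_carrier n \<Longrightarrow> y \<in> cf_carrier n \<Longrightarrow> cf_le x y \<longleftrightarrow> (x = y \<or> cfhi x \<le> cflo y)"
    by (rule cf_le_iff)
qed

definition gg :: "nat \<Rightarrow> nat \<Rightarrow> nat" where "gg n i = (i - 1) * n - (i choose 2)"

lemma cf_gg: "i \<le> j \<Longrightarrow> cf_index n i j = gg n i + (j - i)"
  unfolding cf_index_def gg_def by simp

lemma choose_Suc2: "Suc i choose 2 = i + (i choose 2)"
  by (simp add: numeral_2_eq_2)

lemma two_choose: "2 * (i choose 2) = i * (i - 1)"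
proof (induction i)
  case 0 thus ?case by simp
next
  case (Suc i)
  have "2 * (Suc i choose 2) = 2 * i + i * (i - 1)" using Suc choose_Suc2[of i] by simp
  also have "\<dots> = Suc i * i" by (cases i) (auto simp: algebra_simps)
  finally show ?case by simp
qed

lemma choose_bound: "i \<le> n \<Longrightarrow> (i choose 2) + i \<le> i * n"
proof -
  assume i: "i \<le> n"
  have "2 * (i choose 2) = i * (i - 1)" by (rule two_choose)
  also have "\<dots> \<le> i * (2 * n - 2)" using i by (intro mult_le_mono) auto
  finally have "2 * (i choose 2) \<le> 2 * (i * (n - 1))" by (simp add: algebra_simps diff_mult_distrib2)
  hence "(i choose 2) \<le> i * (n - 1)" by simp
  thus ?thesis using i by (cases n) (auto simp: algebra_simps)
qed

lemma choose_bound2: "1 \<le> i \<Longrightarrow> i \<le> n \<Longrightarrow> (i choose 2) \<le> (i - 1) * n"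
proof -
  assume i: "1 \<le> i" "i \<le> n"
  have "2 * (i choose 2) = i * (i - 1)" by (rule two_choose)
  also have "\<dots> \<le> (2 * n) * (i - 1)" using i by (intro mult_le_mono) auto
  finally show ?thesis by (simp add: mult.commute)
qed

lemma gg_Suc: "1 \<le> i \<Longrightarrow> i < n \<Longrightarrow> gg n (Suc i) = gg n i + (n - i)"
proof -
  assume i: "1 \<le> i" "i < n"
  have c: "Suc i choose 2 = (i choose 2) + i" using choose_Suc2[of i] by simp
  have b1: "(i choose 2) + i \<le> i * n" using choose_bound[of i n] i by simp
  have b2: "(i choose 2) \<le> (i - 1) * n" using choose_bound2[of i n] i by simp
  have e: "i * n = (i - 1) * n + n" using i by (cases i) auto
  show ?thesis unfolding gg_def using c b1 b2 e i by simp
qed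

lemma gg_mono:
  assumes "i \<le> i'" "1 \<le> i" "i' \<le> n" shows "gg n i \<le> gg n i'"
  using assms(1)
proof (induction i' rule: dec_induct)
  case base thus ?case by simp
next
  case (step m) thus ?case using gg_Suc[of m n] assms by simp
qed

lemma cf_mono:
  assumes a: "1 \<le> i" "i < j" "j \<le> n" and b: "1 \<le> i'" "i' < j'" "j' \<le> n"
    and lt: "i < i' \<or> (i = i' \<and> j < j')"
  shows "cf_index n i j < cf_index n i' j'"
proof (cases "i = i'")
  case True thus ?thesis using lt cf_gg[of i j n] cf_gg[of i' j' n] a b by auto
next
  case False
  hence ii: "i < i'" using lt by auto
  have "cf_index n i j = gg n i + (j - i)" using cf_gg a by simp
  also have "\<dots> \<le> gg n i + (n - i)" using a by simp
  also have "\<dots> = gg n (Suc i)" using gg_Suc[of i n] a ii b by simp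
  also have "\<dots> \<le> gg n i'" using gg_mono[of "Suc i" i' n] ii b a by simp
  also have "\<dots> < gg n i' + (j' - i')" using b by simp
  also have "\<dots> = cf_index n i' j'" using cf_gg b by simp
  finally show ?thesis .
qed



context main begin

definition P where "P = {(lo v, hi v) | v. v \<in> D}"
definition cel where "cel p = (SOME v. v \<in> D \<and> (lo v, hi v) = p)"
definition P2 where "P2 = {i. (i, Suc i) \<in> P}"
definition xel where "xel i = (SOME v. v \<in> D \<and> lo v = i \<and> hi v = Suc i \<and> v \<noteq> cel (i, Suc i))"

lemma cel: "p \<in> P \<Longrightarrow> cel p \<in> D \<and> lo (cel p) = fst p \<and> hi (cel p) = snd p"
proof -
  assume "p \<in> P"
  hence ex: "\<exists>v. v \<in> D \<and> (lo v, hi v) = p" unfolding P_def by auto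
  have "cel p \<in> D \<and> (lo (cel p), hi (cel p)) = p" unfolding cel_def by (rule someI_ex[OF ex])
  thus ?thesis by (metis fst_conv snd_conv)
qed

lemma P_range: "p \<in> P \<Longrightarrow> 1 \<le> fst p \<and> fst p < snd p \<and> snd p \<le> n"
  using cel rngD by metis

lemma xel: "i \<in> P2 \<Longrightarrow> xel i \<in> D \<and> lo (xel i) = i \<and> hi (xel i) = Suc i \<and> xel i \<noteq> cel (i, Suc i)"
proof -
  assume "i \<in> P2"
  hence c: "cel (i, Suc i) \<in> D" "lo (cel (i, Suc i)) = i" "hi (cel (i, Suc i)) = Suc i"
    using cel[of "(i, Suc i)"] unfolding P2_def by auto
  then obtain w where "w \<in> D" "w \<noteq> cel (i, Suc i)" "lo w = i" "hi w = Suc i"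
    using FB3[OF c(1)] by auto
  hence ex: "\<exists>v. v \<in> D \<and> lo v = i \<and> hi v = Suc i \<and> v \<noteq> cel (i, Suc i)" by blast
  show ?thesis unfolding xel_def by (rule someI_ex[OF ex])
qed

lemma inP: "v \<in> D \<Longrightarrow> (lo v, hi v) \<in> P" unfolding P_def by auto

lemma classify:
  assumes v: "v \<in> D"
  shows "v = cel (lo v, hi v) \<or> (hi v = Suc (lo v) \<and> lo v \<in> P2 \<and> v = xel (lo v))"
proof -
  have c: "cel (lo v, hi v) \<in> D" "lo (cel (lo v, hi v)) = lo v" "hi (cel (lo v, hi v)) = hi v"
    using cel[OF inP[OF v]] by auto
  show ?thesis
  proof (cases "hi v = Suc (lo v)")
    case False
    hence "Suc (lo v) < hi v" using rngD[OF v] by auto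
    thus ?thesis using FB1[OF v c(1) c(2,3)] by simp
  next
    case True
    hence P2: "lo v \<in> P2" using inP[OF v] unfolding P2_def by simp
    have x: "xel (lo v) \<in> D" "lo (xel (lo v)) = lo v" "hi (xel (lo v)) = hi v" "xel (lo v) \<noteq> cel (lo v, hi v)"
      using xel[OF P2] True by auto
    show ?thesis
    proof (rule ccontr)
      assume "\<not> ?thesis"
      hence "v \<noteq> cel (lo v, hi v)" "v \<noteq> xel (lo v)" using True P2 by auto
      thus False using FB2[OF v c(1) x(1) c(2,3) x(2,3)] x(4) by auto
    qed
  qed
qed

lemma finP: "finite P"
proof -
  have "P \<subseteq> {1..n} \<times> {1..n}" using P_range by fastforce
  thus ?thesis by (rule finite_subset) auto
qed

lemma P2_range: "i \<in> P2 \<Longrightarrow> 1 \<le> i \<and> Suc i \<le> n"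
  using P_range unfolding P2_def by fastforce

lemma finP2: "finite P2"
proof -
  have "P2 \<subseteq> {1..n}" using P2_range by fastforce
  thus ?thesis by (rule finite_subset) auto
qed

lemma D_decomp: "D = cel ` P \<union> xel ` P2"
proof
  show "D \<subseteq> cel ` P \<union> xel ` P2" using classify inP by blast
  show "cel ` P \<union> xel ` P2 \<subseteq> D" using cel xel by blast
qed

lemma cel_xel_disj: "cel ` P \<inter> xel ` P2 = {}"
proof (rule ccontr)
  assume "cel ` P \<inter> xel ` P2 \<noteq> {}"
  then obtain p i where p: "p \<in> P" and i: "i \<in> P2" and e: "cel p = xel i" by blast
  have "p = (i, Suc i)" using cel[OF p] xel[OF i] e by (metis prod.collapse)
  thus False using xel[OF i] e by simp
qed

lemma inj_cel: "inj_on cel P"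
  unfolding inj_on_def using cel by (metis prod.collapse)

lemma inj_xel: "inj_on xel P2"
  unfolding inj_on_def using xel by metis

lemma cardD: "card D = card P + card P2"
  unfolding D_decomp using card_Un_disjoint[OF _ _ cel_xel_disj] finP finP2
    card_image[OF inj_cel] card_image[OF inj_xel] by simp

lemma cardR: "card R = n"
proof -
  have "inj_on u {1..n}" unfolding inj_on_def using u_inj by blast
  thus ?thesis unfolding R_def using card_image by fastforce
qed

lemma finD: "finite D" using fin unfolding D_def by auto

lemma cardV: "card V = n + card D"
proof -
  have "V = R \<union> D" "R \<inter> D = {}" using RV unfolding D_def by auto
  moreover have "finite R" unfolding R_def by simp
  ultimately show ?thesis using card_Un_disjoint finD cardR by metis
qed

definition Z where "Z = {i. 1 \<le> i \<and> Suc i \<le> n \<and> i \<notin> P2}"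

lemma cardZ: "card Z = (n - 1) - card P2"
proof -
  have "Z = {1..<n} - P2" unfolding Z_def by auto
  moreover have "P2 \<subseteq> {1..<n}" using P2_range by fastforce
  ultimately show ?thesis using card_Diff_subset[OF finP2] by simp
qed

lemma no_adj_iff: "1 \<le> i \<Longrightarrow> Suc i \<le> n \<Longrightarrow> (\<not> (\<exists>z\<in>V. lo z = i \<and> hi z = Suc i)) \<longleftrightarrow> i \<notin> P2"
proof
  assume "\<not> (\<exists>z\<in>V. lo z = i \<and> hi z = Suc i)"
  thus "i \<notin> P2" using xel D_V by blast
next
  assume i: "i \<notin> P2"
  show "\<not> (\<exists>z\<in>V. lo z = i \<and> hi z = Suc i)"
  proof
    assume "\<exists>z\<in>V. lo z = i \<and> hi z = Suc i"
    then obtain z where z: "z \<in> V" "lo z = i" "hi z = Suc i" by blast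
    hence "z \<in> D" using R_eq[OF z(1)] unfolding D_def by auto
    thus False using inP[of z] z i unfolding P2_def by auto
  qed
qed

lemma edges: "cover_edges V le = (\<lambda>v. (u (lo v), v)) ` D \<union> (\<lambda>v. (v, u (hi v))) ` D \<union> (\<lambda>i. (u i, u (Suc i))) ` Z"
proof
  show "cover_edges V le \<subseteq> (\<lambda>v. (u (lo v), v)) ` D \<union> (\<lambda>v. (v, u (hi v))) ` D \<union> (\<lambda>i. (u i, u (Suc i))) ` Z"
  proof
    fix e assume "e \<in> cover_edges V le"
    then obtain x y where e: "e = (x, y)" and c: "covers V le x y" unfolding cover_edges_def by auto
    have xy: "x \<in> V" "y \<in> V" using c unfolding covers_def by auto
    from M.cov_conv[OF c] show "e \<in> (\<lambda>v. (u (lo v), v)) ` D \<union> (\<lambda>v. (v, u (hi v))) ` D \<union> (\<lambda>i. (u i, u (Suc i))) ` Z"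
    proof (elim disjE conjE exE)
      assume a: "lo x < hi x" "y = u (hi x)"
      hence "x \<in> D" using R_eq[OF xy(1)] xy unfolding D_def by auto
      thus ?thesis using a e by blast
    next
      assume a: "lo y < hi y" "x = u (lo y)"
      hence "y \<in> D" using R_eq[OF xy(2)] xy unfolding D_def by auto
      thus ?thesis using a e by blast
    next
      fix i assume a: "1 \<le> i" "Suc i \<le> n" "x = u i" "y = u (Suc i)" "\<not> (\<exists>z\<in>V. lo z = i \<and> hi z = Suc i)"
      hence "i \<in> Z" using no_adj_iff unfolding Z_def by auto
      thus ?thesis using a e by blast
    qed
  qed
  show "(\<lambda>v. (u (lo v), v)) ` D \<union> (\<lambda>v. (v, u (hi v))) ` D \<union> (\<lambda>i. (u i, u (Suc i))) ` Z \<subseteq> cover_edges V le"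
  proof -
    have "covers V le (u (lo v)) v" if "v \<in> D" for v using M.cov1 D_V D_lt that by blast
    moreover have "covers V le v (u (hi v))" if "v \<in> D" for v using M.cov2 D_V D_lt that by blast
    moreover have "covers V le (u i) (u (Suc i))" if "i \<in> Z" for i
      using M.cov3[of i] no_adj_iff[of i] that unfolding Z_def by auto
    ultimately show ?thesis unfolding cover_edges_def by auto
  qed
qed

lemma nullity_val: "nullity V le = int (card P)"
proof -
  define E1 where "E1 = (\<lambda>v. (u (lo v), v)) ` D"
  define E2 where "E2 = (\<lambda>v. (v, u (hi v))) ` D"
  define E3 where "E3 = (\<lambda>i. (u i, u (Suc i))) ` Z"
  have DR: "\<And>v. v \<in> D \<Longrightarrow> v \<notin> R" unfolding D_def by auto
  have hiR: "\<And>v. v \<in> D \<Longrightarrow> u (hi v) \<in> R" "\<And>v. v \<in> D \<Longrightarrow> u (lo v) \<in> R"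
  proof -
    fix v assume v: "v \<in> D"
    have "hi v \<in> {1..n}" "lo v \<in> {1..n}" using rngD[OF v] by auto
    thus "u (hi v) \<in> R" "u (lo v) \<in> R" using uR by auto
  qed
  have ZR: "\<And>i. i \<in> Z \<Longrightarrow> u i \<in> R \<and> u (Suc i) \<in> R" using uR unfolding Z_def by auto
  have d12: "E1 \<inter> E2 = {}" unfolding E1_def E2_def using DR hiR by auto
  have d3: "(E1 \<union> E2) \<inter> E3 = {}" unfolding E1_def E2_def E3_def using DR ZR by auto
  have fZ: "finite Z" by (rule finite_subset[of Z "{..n}"]) (auto simp: Z_def)
  have c1: "card E1 = card D" unfolding E1_def by (rule card_image) (auto simp: inj_on_def)
  have c2: "card E2 = card D" unfolding E2_def by (rule card_image) (auto simp: inj_on_def)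
  have c3: "card E3 = card Z" unfolding E3_def
  proof (rule card_image)
    show "inj_on (\<lambda>i. (u i, u (Suc i))) Z" unfolding inj_on_def Z_def using u_inj by auto
  qed
  have fE: "finite E1" "finite E2" "finite E3" unfolding E1_def E2_def E3_def using finD fZ by auto
  have cE: "card (cover_edges V le) = 2 * card D + card Z"
    unfolding edges E1_def[symmetric] E2_def[symmetric] E3_def[symmetric]
    using card_Un_disjoint[OF _ _ d3] card_Un_disjoint[OF _ _ d12] fE c1 c2 c3 by simp
  have e1: "u 1 \<in> V" "\<forall>w\<in>V. le (u 1) w"
  proof -
    show u1: "u 1 \<in> V" using uV n2 by auto
    show "\<forall>w\<in>V. le (u 1) w"
    proof
      fix w assume w: "w \<in> V"
      show "le (u 1) w" using M.le_iff[OF u1 w] hi_u[of 1] n2 M.rng[OF w] by auto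
    qed
  qed
  have cc: "card (V // cover_conn V le) = 1" using conn_quot_least[OF fin po e1] .
  have p2: "card P2 \<le> n - 1" using cardZ card_mono[of "{1..<n}" P2] P2_range by fastforce
  show ?thesis unfolding nullity_def using cE cc cardV cardD cardZ p2 n2 by simp
qed

end



lemma fl_cong:
  assumes ag: "\<forall>x\<in>W. \<forall>y\<in>W. o1 x y = o2 x y"
  shows "fin_lattice W o1 = fin_lattice W o2"
proof -
  have p: "po_on W o1 = po_on W o2" unfolding po_on_def using ag by auto
  have l: "is_lub W o1 x y z = is_lub W o2 x y z" if "x \<in> W" "y \<in> W" for x y z
    unfolding is_lub_def using ag that by auto
  have g: "is_glb W o1 x y z = is_glb W o2 x y z" if "x \<in> W" "y \<in> W" for x y z
    unfolding is_glb_def using ag that by auto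
  have q: "((\<exists>z. is_lub W o1 x y z) \<and> (\<exists>z. is_glb W o1 x y z)) = ((\<exists>z. is_lub W o2 x y z) \<and> (\<exists>z. is_glb W o2 x y z))"
    if "x \<in> W" "y \<in> W" for x y using l[OF that] g[OF that] by simp
  have "(\<forall>x\<in>W. \<forall>y\<in>W. (\<exists>z. is_lub W o1 x y z) \<and> (\<exists>z. is_glb W o1 x y z))
      = (\<forall>x\<in>W. \<forall>y\<in>W. (\<exists>z. is_lub W o2 x y z) \<and> (\<exists>z. is_glb W o2 x y z))"
    using q by blast
  thus ?thesis unfolding fin_lattice_def using p by simp
qed

lemma cov_cong:
  assumes ag: "\<forall>x\<in>W. \<forall>y\<in>W. o1 x y = o2 x y"
  shows "covers W o1 a b = covers W o2 a b"
  unfolding covers_def using ag by auto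

context main begin

lemma fold_step:
  assumes RW: "R \<subseteq> W" and WV: "W \<subseteq> V" and ag: "\<forall>x\<in>W. \<forall>y\<in>W. ord x y = le x y"
    and c: "c \<in> D" "c \<notin> W"
    and wit: "Suc (lo c) < hi c \<or> (\<exists>x\<in>W \<inter> D. lo x = lo c \<and> hi x = hi c)"
  shows "adjunct_ok (W, ord) (u (lo c)) (u (hi c)) ({c}, le)"
    "fst (adjunct (W, ord) (u (lo c)) (u (hi c)) ({c}, le)) = W \<union> {c}"
    "\<forall>x\<in>W \<union> {c}. \<forall>y\<in>W \<union> {c}. snd (adjunct (W, ord) (u (lo c)) (u (hi c)) ({c}, le)) x y = le x y"
proof -
  have cV: "c \<in> V" using D_V[OF c(1)] .
  have r: "1 \<le> lo c" "lo c < hi c" "hi c \<le> n" using rngD[OF c(1)] by auto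
  have lk: "lo c \<in> {1..n}" "hi c \<in> {1..n}" using r by auto
  have uW: "u (lo c) \<in> W" "u (hi c) \<in> W" using RW uR[OF lk(1)] uR[OF lk(2)] by auto
  have uV2: "u (lo c) \<in> V" "u (hi c) \<in> V" using uV lk by auto
  have RW': "u ` {1..n} \<subseteq> W" using RW unfolding R_def .
  interpret MW: model W le n lo hi u using M.sub[OF WV RW'] .
  have fl: "fin_lattice W ord" using fl_cong[OF ag] MW.lattice by simp
  have fl1: "fin_lattice {c} le"
    unfolding fin_lattice_def po_on_def is_lub_def is_glb_def using M.le_refl[OF cV] by auto
  have neq: "u (lo c) \<noteq> u (hi c)" using u_inj[OF lk] r by auto
  have ule: "ord (u (lo c)) (u (hi c))" using ag uW u_le[OF lk] r by auto
  have ncov: "\<not> covers W ord (u (lo c)) (u (hi c))"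
  proof -
    have "\<exists>z\<in>W. z \<noteq> u (lo c) \<and> z \<noteq> u (hi c) \<and> le (u (lo c)) z \<and> le z (u (hi c))"
    proof (cases "Suc (lo c) < hi c")
      case True
      have k: "Suc (lo c) \<in> {1..n}" using True r by auto
      have "u (Suc (lo c)) \<in> W" using RW uR[OF k] by auto
      moreover have "u (Suc (lo c)) \<noteq> u (lo c)" "u (Suc (lo c)) \<noteq> u (hi c)" using u_inj[OF k lk(1)] u_inj[OF k lk(2)] True by auto
      moreover have "le (u (lo c)) (u (Suc (lo c)))" "le (u (Suc (lo c))) (u (hi c))" using u_le[OF lk(1) k] u_le[OF k lk(2)] True by auto
      ultimately show ?thesis by blast
    next
      case False
      then obtain x where x: "x \<in> W" "x \<in> D" "lo x = lo c" "hi x = hi c" using wit by blast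
      have xV: "x \<in> V" using D_V[OF x(2)] .
      have "x \<noteq> u (lo c)" "x \<noteq> u (hi c)" using x(2) uR[OF lk(1)] uR[OF lk(2)] unfolding D_def by auto
      moreover have "le (u (lo c)) x" "le x (u (hi c))" using M.le_u_lo[OF xV] M.le_u_hi[OF xV] x by auto
      ultimately show ?thesis using x by blast
    qed
    thus ?thesis using cov_cong[OF ag] unfolding covers_def by auto
  qed
  show "adjunct_ok (W, ord) (u (lo c)) (u (hi c)) ({c}, le)"
    unfolding adjunct_ok_def using fl fl1 c(2) uW neq ule ncov by auto
  show "fst (adjunct (W, ord) (u (lo c)) (u (hi c)) ({c}, le)) = W \<union> {c}" unfolding adjunct_def by simp
  show "\<forall>x\<in>W \<union> {c}. \<forall>y\<in>W \<union> {c}. snd (adjunct (W, ord) (u (lo c)) (u (hi c)) ({c}, le)) x y = le x y"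
  proof (intro ballI)
    fix x y assume x: "x \<in> W \<union> {c}" and y: "y \<in> W \<union> {c}"
    have xV: "x \<in> V" and yV: "y \<in> V" using x y WV cV by auto
    show "snd (adjunct (W, ord) (u (lo c)) (u (hi c)) ({c}, le)) x y = le x y"
    proof (cases "x = c")
      case xc: True
      show ?thesis
      proof (cases "y = c")
        case True thus ?thesis using xc c(2) M.le_refl[OF cV] unfolding adjunct_def by auto
      next
        case False
        hence yW: "y \<in> W" using y by auto
        have "le c y \<longleftrightarrow> le (u (hi c)) y"
          using M.le_iff[OF cV yV] M.le_iff[OF uV2(2) yV] hi_u[OF lk(2)] lo_u[OF lk(2)] False xc by auto
        thus ?thesis using xc False yW c(2) ag uW unfolding adjunct_def by auto
      qed
    next
      case xnc: False
      hence xW: "x \<in> W" using x by auto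
      show ?thesis
      proof (cases "y = c")
        case True
        have "le x c \<longleftrightarrow> le x (u (lo c))"
          using M.le_iff[OF xV cV] M.le_iff[OF xV uV2(1)] hi_u[OF lk(1)] lo_u[OF lk(1)] xnc by auto
        thus ?thesis using True xnc xW c(2) ag uW unfolding adjunct_def by auto
      next
        case False
        hence yW: "y \<in> W" using y by auto
        thus ?thesis using xW xnc False c(2) ag unfolding adjunct_def by auto
      qed
    qed
  qed
qed

lemma fold_all:
  "\<forall>W ord. R \<subseteq> W \<longrightarrow> W \<subseteq> V \<longrightarrow> (\<forall>x\<in>W. \<forall>y\<in>W. ord x y = le x y) \<longrightarrow> distinct cs \<longrightarrow>
     set cs \<subseteq> D \<longrightarrow> set cs \<inter> W = {} \<longrightarrow>
     (\<forall>c\<in>set cs. Suc (lo c) < hi c \<or> (\<exists>x\<in>W \<inter> D. lo x = lo c \<and> hi x = hi c)) \<longrightarrow>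
     adj_valid le (W, ord) (map (\<lambda>c. (u (lo c), u (hi c), {c})) cs)
     \<and> fst (adj_fold le (W, ord) (map (\<lambda>c. (u (lo c), u (hi c), {c})) cs)) = W \<union> set cs
     \<and> (\<forall>x\<in>W \<union> set cs. \<forall>y\<in>W \<union> set cs. snd (adj_fold le (W, ord) (map (\<lambda>c. (u (lo c), u (hi c), {c})) cs)) x y = le x y)"
proof (induction cs)
  case Nil thus ?case by simp
next
  case (Cons c cs)
  show ?case
  proof (intro allI impI)
    fix W ord
    assume RW: "R \<subseteq> W" and WV: "W \<subseteq> V" and ag: "\<forall>x\<in>W. \<forall>y\<in>W. ord x y = le x y"
      and d: "distinct (c # cs)" and sD: "set (c # cs) \<subseteq> D" and dj: "set (c # cs) \<inter> W = {}"
      and wit: "\<forall>c'\<in>set (c # cs). Suc (lo c') < hi c' \<or> (\<exists>x\<in>W \<inter> D. lo x = lo c' \<and> hi x = hi c')"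
    have cD: "c \<in> D" "c \<notin> W" using sD dj by auto
    note st = fold_step[OF RW WV ag cD, of ]
    have w1: "Suc (lo c) < hi c \<or> (\<exists>x\<in>W \<inter> D. lo x = lo c \<and> hi x = hi c)" using wit by simp
    note st = fold_step[OF RW WV ag cD w1]
    define L' where "L' = adjunct (W, ord) (u (lo c)) (u (hi c)) ({c}, le)"
    have L': "L' = (W \<union> {c}, snd L')" using st(2) unfolding L'_def by (metis prod.collapse)
    have RW': "R \<subseteq> W \<union> {c}" using RW by auto
    have WV': "W \<union> {c} \<subseteq> V" using WV D_V[OF cD(1)] by auto
    have ag': "\<forall>x\<in>W \<union> {c}. \<forall>y\<in>W \<union> {c}. snd L' x y = le x y" using st(3) unfolding L'_def .
    have d': "distinct cs" using d by simp
    have sD': "set cs \<subseteq> D" using sD by simp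
    have dj': "set cs \<inter> (W \<union> {c}) = {}" using dj d by auto
    have wit': "\<forall>c'\<in>set cs. Suc (lo c') < hi c' \<or> (\<exists>x\<in>(W \<union> {c}) \<inter> D. lo x = lo c' \<and> hi x = hi c')"
      using wit by auto
    have IH: "adj_valid le (W \<union> {c}, snd L') (map (\<lambda>c. (u (lo c), u (hi c), {c})) cs)
     \<and> fst (adj_fold le (W \<union> {c}, snd L') (map (\<lambda>c. (u (lo c), u (hi c), {c})) cs)) = (W \<union> {c}) \<union> set cs
     \<and> (\<forall>x\<in>(W \<union> {c}) \<union> set cs. \<forall>y\<in>(W \<union> {c}) \<union> set cs. snd (adj_fold le (W \<union> {c}, snd L') (map (\<lambda>c. (u (lo c), u (hi c), {c})) cs)) x y = le x y)"
      using Cons.IH RW' WV' ag' d' sD' dj' wit' by blast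
    have e: "adj_fold le (W, ord) (map (\<lambda>c. (u (lo c), u (hi c), {c})) (c # cs)) = adj_fold le L' (map (\<lambda>c. (u (lo c), u (hi c), {c})) cs)"
      unfolding L'_def by simp
    have v: "adj_valid le (W, ord) (map (\<lambda>c. (u (lo c), u (hi c), {c})) (c # cs)) \<longleftrightarrow> adj_valid le L' (map (\<lambda>c. (u (lo c), u (hi c), {c})) cs)"
      using st(1) unfolding L'_def by simp
    have s: "W \<union> set (c # cs) = (W \<union> {c}) \<union> set cs" by auto
    show "adj_valid le (W, ord) (map (\<lambda>c. (u (lo c), u (hi c), {c})) (c # cs))
     \<and> fst (adj_fold le (W, ord) (map (\<lambda>c. (u (lo c), u (hi c), {c})) (c # cs))) = W \<union> set (c # cs)
     \<and> (\<forall>x\<in>W \<union> set (c # cs). \<forall>y\<in>W \<union> set (c # cs). snd (adj_fold le (W, ord) (map (\<lambda>c. (u (lo c), u (hi c), {c})) (c # cs))) x y = le x y)"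
      unfolding e v s using IH unfolding L'[symmetric] by blast
  qed
qed

end



context main begin

definition ijl where "ijl = sorted_list_of_set P"
definition C0x where "C0x = u ` {1..n} \<union> {xel i | i. (i, Suc i) \<in> set ijl}"

lemma set_ijl: "set ijl = P" unfolding ijl_def using finP by simp
lemma len_ijl: "length ijl = card P" unfolding ijl_def using finP by simp
lemma sorted_ijl: "sorted_wrt (<) ijl" unfolding ijl_def by simp
lemma dist_ijl: "distinct ijl" unfolding ijl_def by simp

lemma C0x_eq: "C0x = R \<union> xel ` P2"
  unfolding C0x_def R_def P2_def set_ijl by auto

lemma C0x_V: "C0x \<subseteq> V" unfolding C0x_eq using RV xel D_V by blast
lemma R_C0x: "u ` {1..n} \<subseteq> C0x" unfolding C0x_def by auto

lemma C0x_prop: "z \<in> C0x \<Longrightarrow> hi z \<le> Suc (lo z) \<and> (lo z \<noteq> hi z \<longrightarrow> lo z \<in> P2 \<and> z = xel (lo z))"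
proof -
  assume z: "z \<in> C0x"
  show ?thesis
  proof (cases "z \<in> R")
    case True
    then obtain k where "k \<in> {1..n}" "z = u k" unfolding R_def by auto
    thus ?thesis using lo_u hi_u by simp
  next
    case False
    then obtain i where "i \<in> P2" "z = xel i" using z unfolding C0x_eq by auto
    thus ?thesis using xel by auto
  qed
qed

lemma maxchain: "maximal_chain V le C0x"
  unfolding maximal_chain_def
proof
  show ch: "is_chain V le C0x" unfolding is_chain_def
  proof (intro conjI ballI)
    show "C0x \<subseteq> V" by (rule C0x_V)
    fix x y assume x: "x \<in> C0x" and y: "y \<in> C0x"
    have xV: "x \<in> V" "y \<in> V" using x y C0x_V by auto
    have px: "hi x \<le> Suc (lo x)" "lo x \<noteq> hi x \<longrightarrow> lo x \<in> P2 \<and> x = xel (lo x)" using C0x_prop[OF x] by auto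
    have py: "hi y \<le> Suc (lo y)" "lo y \<noteq> hi y \<longrightarrow> lo y \<in> P2 \<and> y = xel (lo y)" using C0x_prop[OF y] by auto
    have rx: "lo x \<le> hi x" "lo y \<le> hi y" using M.rng xV by auto
    show "le x y \<or> le y x"
    proof (rule ccontr)
      assume nc: "\<not> (le x y \<or> le y x)"
      hence a: "x \<noteq> y" "lo y < hi x" "lo x < hi y" using M.le_iff[OF xV(1) xV(2)] M.le_iff[OF xV(2) xV(1)] by auto
      hence e: "lo x = lo y" using px(1) py(1) by auto
      have "lo x \<noteq> hi x" "lo y \<noteq> hi y" using a e rx by auto
      hence "x = y" using px(2) py(2) e by auto
      thus False using a by simp
    qed
  qed
  show "\<forall>D'. is_chain V le D' \<and> C0x \<subseteq> D' \<longrightarrow> D' = C0x"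
  proof (intro allI impI)
    fix D' assume a: "is_chain V le D' \<and> C0x \<subseteq> D'"
    show "D' = C0x"
    proof (rule ccontr)
      assume "D' \<noteq> C0x"
      then obtain y where y: "y \<in> D'" "y \<notin> C0x" using a by auto
      have yV: "y \<in> V" using a y unfolding is_chain_def by auto
      have yD: "y \<in> D" using yV y RV C0x_eq unfolding D_def by auto
      have r: "1 \<le> lo y" "lo y < hi y" "hi y \<le> n" using rngD[OF yD] by auto
      have comp: "\<And>z. z \<in> C0x \<Longrightarrow> le y z \<or> le z y" using a y unfolding is_chain_def by blast
      show False
      proof (cases "hi y = Suc (lo y)")
        case False
        have k: "Suc (lo y) \<in> {1..n}" using r False by auto
        have zC: "u (Suc (lo y)) \<in> C0x" using R_C0x k by auto
        have zV: "u (Suc (lo y)) \<in> V" using uV[OF k] .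
        have "y \<noteq> u (Suc (lo y))" using y zC by auto
        thus False using comp[OF zC] M.le_iff[OF yV zV] M.le_iff[OF zV yV] lo_u[OF k] hi_u[OF k] r False by auto
      next
        case True
        have P2: "lo y \<in> P2" using inP[OF yD] True unfolding P2_def by simp
        have x: "xel (lo y) \<in> D" "lo (xel (lo y)) = lo y" "hi (xel (lo y)) = Suc (lo y)" using xel[OF P2] by auto
        have xC: "xel (lo y) \<in> C0x" using P2 unfolding C0x_eq by auto
        have xV: "xel (lo y) \<in> V" using D_V[OF x(1)] .
        have "y \<noteq> xel (lo y)" using y xC by auto
        thus False using comp[OF xC] M.le_iff[OF yV xV] M.le_iff[OF xV yV] x True by auto
      qed
    qed
  qed
qed

interpretation MC: model C0x le n lo hi u using M.sub[OF C0x_V R_C0x] .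

lemma covs:
  assumes i: "1 \<le> i" "i < n"
  shows "(if (i, Suc i) \<in> set ijl
          then xel i \<in> V \<and> covers C0x le (u i) (xel i) \<and> covers C0x le (xel i) (u (Suc i))
          else covers C0x le (u i) (u (Suc i)))"
proof (cases "(i, Suc i) \<in> set ijl")
  case True
  hence P2: "i \<in> P2" unfolding set_ijl P2_def by simp
  have x: "xel i \<in> D" "lo (xel i) = i" "hi (xel i) = Suc i" using xel[OF P2] by auto
  have xC: "xel i \<in> C0x" using P2 unfolding C0x_eq by auto
  have "covers C0x le (u (lo (xel i))) (xel i)" "covers C0x le (xel i) (u (hi (xel i)))"
    using MC.cov1[OF xC] MC.cov2[OF xC] x by auto
  thus ?thesis using True x D_V by simp
next
  case False
  hence nP2: "i \<notin> P2" unfolding set_ijl P2_def by simp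
  have "\<not> (\<exists>z\<in>C0x. lo z = i \<and> hi z = Suc i)"
  proof
    assume "\<exists>z\<in>C0x. lo z = i \<and> hi z = Suc i"
    then obtain z where z: "z \<in> C0x" "lo z = i" "hi z = Suc i" by blast
    thus False using C0x_prop[OF z(1)] nP2 by auto
  qed
  hence "covers C0x le (u i) (u (Suc i))" using MC.cov3[of i] i by auto
  thus ?thesis using False by simp
qed

definition psx where "psx = map (\<lambda>c. (u (lo c), u (hi c), {c})) (map cel ijl)"

lemma psx_eq: "map (\<lambda>s. (u (fst (ijl ! s)), u (snd (ijl ! s)), {cel (ijl ! s)})) [0..<card P] = psx"
proof (rule nth_equalityI)
  show "length (map (\<lambda>s. (u (fst (ijl ! s)), u (snd (ijl ! s)), {cel (ijl ! s)})) [0..<card P]) = length psx"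
    unfolding psx_def using len_ijl by simp
  fix s assume "s < length (map (\<lambda>s. (u (fst (ijl ! s)), u (snd (ijl ! s)), {cel (ijl ! s)})) [0..<card P])"
  hence s: "s < length ijl" using len_ijl by simp
  hence "ijl ! s \<in> P" using set_ijl nth_mem by blast
  thus "map (\<lambda>s. (u (fst (ijl ! s)), u (snd (ijl ! s)), {cel (ijl ! s)})) [0..<card P] ! s = psx ! s"
    unfolding psx_def using s len_ijl cel by simp
qed

lemma rep_ok: "adjunct_rep V le C0x psx"
proof -
  have ag: "\<forall>x\<in>C0x. \<forall>y\<in>C0x. le x y = le x y" by simp
  have RC: "R \<subseteq> C0x" using R_C0x unfolding R_def .
  have d: "distinct (map cel ijl)" using dist_ijl inj_cel set_ijl by (simp add: distinct_map)
  have sD: "set (map cel ijl) \<subseteq> D" using cel set_ijl by auto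
  have dj: "set (map cel ijl) \<inter> C0x = {}"
  proof -
    have "cel ` P \<inter> R = {}" using cel unfolding D_def by auto
    thus ?thesis using cel_xel_disj set_ijl unfolding C0x_eq by auto
  qed
  have wit: "\<forall>c\<in>set (map cel ijl). Suc (lo c) < hi c \<or> (\<exists>x\<in>C0x \<inter> D. lo x = lo c \<and> hi x = hi c)"
  proof
    fix c assume "c \<in> set (map cel ijl)"
    then obtain p where p: "p \<in> P" "c = cel p" using set_ijl by auto
    have cp: "c \<in> D" "lo c = fst p" "hi c = snd p" using cel[OF p(1)] p by auto
    show "Suc (lo c) < hi c \<or> (\<exists>x\<in>C0x \<inter> D. lo x = lo c \<and> hi x = hi c)"
    proof (cases "hi c = Suc (lo c)")
      case False thus ?thesis using rngD[OF cp(1)] by auto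
    next
      case True
      hence "(lo c, Suc (lo c)) \<in> P" using p cp by (metis prod.collapse)
      hence P2: "lo c \<in> P2" unfolding P2_def by simp
      have "xel (lo c) \<in> C0x \<inter> D" using xel[OF P2] P2 unfolding C0x_eq by auto
      thus ?thesis using xel[OF P2] True by auto
    qed
  qed
  have F: "adj_valid le (C0x, le) psx \<and> fst (adj_fold le (C0x, le) psx) = C0x \<union> set (map cel ijl)
     \<and> (\<forall>x\<in>C0x \<union> set (map cel ijl). \<forall>y\<in>C0x \<union> set (map cel ijl). snd (adj_fold le (C0x, le) psx) x y = le x y)"
    using fold_all[of "map cel ijl"] RC C0x_V ag d sD dj wit unfolding psx_def by blast
  have VV: "C0x \<union> set (map cel ijl) = V"
  proof -
    have "set (map cel ijl) = cel ` P" using set_ijl by simp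
    moreover have "V = R \<union> D" using RV unfolding D_def by auto
    ultimately show ?thesis unfolding C0x_eq D_decomp by auto
  qed
  have chains: "\<forall>(a, b, C)\<in>set psx. is_chain V le C \<and> C \<noteq> {}"
  proof
    fix t assume "t \<in> set psx"
    then obtain p where p: "p \<in> P" "t = (u (lo (cel p)), u (hi (cel p)), {cel p})" unfolding psx_def using set_ijl by auto
    have cV: "cel p \<in> V" using cel[OF p(1)] D_V by auto
    have "is_chain V le {cel p}" unfolding is_chain_def using cV M.le_refl[OF cV] by auto
    thus "case t of (a, b, C) \<Rightarrow> is_chain V le C \<and> C \<noteq> {}" using p by simp
  qed
  show ?thesis unfolding adjunct_rep_def using maxchain chains F VV by simp
qed

definition fmap where "fmap x = (if x \<in> R then U (lo x) else if hi x = Suc (lo x) \<and> x = xel (lo x) then X (lo x) else Cc (lo x) (hi x))"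

lemma fmap_props: "x \<in> V \<Longrightarrow> fmap x \<in> cf_carrier n \<and> cflo (fmap x) = lo x \<and> cfhi (fmap x) = hi x"
proof -
  assume x: "x \<in> V"
  have r: "1 \<le> lo x" "lo x \<le> hi x" "hi x \<le> n" using M.rng[OF x] by auto
  show ?thesis
  proof (cases "x \<in> R")
    case True thus ?thesis using R_eq[OF x] r unfolding fmap_def cf_carrier_def by auto
  next
    case False
    hence xD: "x \<in> D" using x unfolding D_def by auto
    have lt: "lo x < hi x" using rngD[OF xD] by auto
    show ?thesis
    proof (cases "hi x = Suc (lo x) \<and> x = xel (lo x)")
      case True thus ?thesis using False r unfolding fmap_def cf_carrier_def by auto
    next
      case f2: False thus ?thesis using False r lt unfolding fmap_def cf_carrier_def by auto
    qed
  qed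
qed

lemma fmap_inj: "inj_on fmap V"
proof (rule inj_onI)
  fix x y assume x: "x \<in> V" and y: "y \<in> V" and e: "fmap x = fmap y"
  have tl: "lo x = lo y" "hi x = hi y" using fmap_props[OF x] fmap_props[OF y] e by metis+
  consider (r) "x \<in> R" | (xx) "x \<notin> R" "hi x = Suc (lo x) \<and> x = xel (lo x)" | (cc) "x \<notin> R" "\<not> (hi x = Suc (lo x) \<and> x = xel (lo x))" by blast
  thus "x = y"
  proof cases
    case r
    hence "y \<in> R" using e unfolding fmap_def by (auto split: if_splits)
    thus ?thesis using r M.eq_u[OF x] M.eq_u[OF y] R_eq[OF x] R_eq[OF y] tl by metis
  next
    case xx
    hence "y \<notin> R" "hi y = Suc (lo y) \<and> y = xel (lo y)" using e unfolding fmap_def by (auto split: if_splits)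
    thus ?thesis using xx tl by metis
  next
    case cc
    hence yc: "y \<notin> R" "\<not> (hi y = Suc (lo y) \<and> y = xel (lo y))" using e unfolding fmap_def by (auto split: if_splits)
    have "x = cel (lo x, hi x)" using classify[of x] cc x unfolding D_def by auto
    moreover have "y = cel (lo y, hi y)" using classify[of y] yc y unfolding D_def by auto
    ultimately show ?thesis using tl by simp
  qed
qed

lemma second:
  "\<exists>S f. sublattice (cf_carrier n) cf_le S \<and> {U i | i. 1 \<le> i \<and> i \<le> n} \<subseteq> S
      \<and> order_iso V le S cf_le f \<and> (\<forall>i\<in>{1..n}. f (u i) = U i)"
proof (intro exI conjI)
  interpret CF: model "cf_carrier n" cf_le n cflo cfhi U using cf_model n2 by simp
  have fu: "\<forall>i\<in>{1..n}. fmap (u i) = U i"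
  proof
    fix i assume i: "i \<in> {1..n}"
    thus "fmap (u i) = U i" unfolding fmap_def using uR[OF i] lo_u[OF i] by simp
  qed
  thus "\<forall>i\<in>{1..n}. fmap (u i) = U i" .
  show Us: "{U i | i. 1 \<le> i \<and> i \<le> n} \<subseteq> fmap ` V"
  proof
    fix z assume "z \<in> {U i | i. 1 \<le> i \<and> i \<le> n}"
    then obtain i where i: "i \<in> {1..n}" "z = U i" by auto
    thus "z \<in> fmap ` V" using fu uV[OF i(1)] by force
  qed
  show "sublattice (cf_carrier n) cf_le (fmap ` V)"
    unfolding sublattice_def
  proof (intro conjI ballI allI impI)
    show "fmap ` V \<subseteq> cf_carrier n" using fmap_props by auto
    show "fmap ` V \<noteq> {}" using uV[of 1] n2 by auto
    fix a b z assume a: "a \<in> fmap ` V" and b: "b \<in> fmap ` V" and z: "is_lub (cf_carrier n) cf_le a b z \<or> is_glb (cf_carrier n) cf_le a b z"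
    have ab: "a \<in> cf_carrier n" "b \<in> cf_carrier n" using a b fmap_props by auto
    have "z = a \<or> z = b \<or> z \<in> U ` {1..n}" using z CF.lub_cases[OF ab] CF.glb_cases[OF ab] by blast
    thus "z \<in> fmap ` V" using a b Us by auto
  qed
  show "order_iso V le (fmap ` V) cf_le fmap"
    unfolding order_iso_def
  proof (intro conjI ballI)
    show "bij_betw fmap V (fmap ` V)" using fmap_inj by (simp add: bij_betw_def)
    fix x y assume x: "x \<in> V" and y: "y \<in> V"
    have "x = y \<longleftrightarrow> fmap x = fmap y" using fmap_inj x y unfolding inj_on_def by blast
    thus "le x y \<longleftrightarrow> cf_le (fmap x) (fmap y)"
      using M.le_iff[OF x y] cf_le_iff fmap_props[OF x] fmap_props[OF y] by simp
  qed
qed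

lemma result:
  assumes nl: "nullity V le = int l"
  shows "(\<exists>(ij :: (nat \<times> nat) list) (c :: nat \<Rightarrow> 'a) (x :: nat \<Rightarrow> 'a).
            let C0' = u ` {1..n} \<union> {x i | i. (i, Suc i) \<in> set ij} in
            length ij = l
          \<and> (\<forall>s<l. 1 \<le> fst (ij ! s) \<and> fst (ij ! s) < snd (ij ! s) \<and> snd (ij ! s) \<le> n)
          \<and> (\<forall>s t. s < t \<and> t < l \<longrightarrow>
                cf_index n (fst (ij ! s)) (snd (ij ! s)) < cf_index n (fst (ij ! t)) (snd (ij ! t)))
          \<and> (\<forall>i. 1 \<le> i \<and> i < n \<longrightarrow>
                (if (i, Suc i) \<in> set ij
                 then x i \<in> V \<and> covers C0' le (u i) (x i) \<and> covers C0' le (x i) (u (Suc i))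
                 else covers C0' le (u i) (u (Suc i))))
          \<and> adjunct_rep V le C0'
              (map (\<lambda>s. (u (fst (ij ! s)), u (snd (ij ! s)), {c s})) [0..<l]))
       \<and> (\<exists>S f. sublattice (cf_carrier n) cf_le S
              \<and> {U i | i. 1 \<le> i \<and> i \<le> n} \<subseteq> S
              \<and> order_iso V le S cf_le f
              \<and> (\<forall>i\<in>{1..n}. f (u i) = U i))"
proof (intro conjI)
  show "\<exists>S f. sublattice (cf_carrier n) cf_le S \<and> {U i | i. 1 \<le> i \<and> i \<le> n} \<subseteq> S
      \<and> order_iso V le S cf_le f \<and> (\<forall>i\<in>{1..n}. f (u i) = U i)" by (rule second)
  have l: "l = card P" using nl nullity_val by simp
  have inP: "\<And>s. s < l \<Longrightarrow> ijl ! s \<in> P" using l len_ijl set_ijl nth_mem by metis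
  show "\<exists>(ij :: (nat \<times> nat) list) (c :: nat \<Rightarrow> 'a) (x :: nat \<Rightarrow> 'a).
            let C0' = u ` {1..n} \<union> {x i | i. (i, Suc i) \<in> set ij} in
            length ij = l
          \<and> (\<forall>s<l. 1 \<le> fst (ij ! s) \<and> fst (ij ! s) < snd (ij ! s) \<and> snd (ij ! s) \<le> n)
          \<and> (\<forall>s t. s < t \<and> t < l \<longrightarrow>
                cf_index n (fst (ij ! s)) (snd (ij ! s)) < cf_index n (fst (ij ! t)) (snd (ij ! t)))
          \<and> (\<forall>i. 1 \<le> i \<and> i < n \<longrightarrow>
                (if (i, Suc i) \<in> set ij
                 then x i \<in> V \<and> covers C0' le (u i) (x i) \<and> covers C0' le (x i) (u (Suc i))
                 else covers C0' le (u i) (u (Suc i))))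
          \<and> adjunct_rep V le C0'
              (map (\<lambda>s. (u (fst (ij ! s)), u (snd (ij ! s)), {c s})) [0..<l])"
  proof (intro exI)
    show "let C0' = u ` {1..n} \<union> {xel i | i. (i, Suc i) \<in> set ijl} in
            length ijl = l
          \<and> (\<forall>s<l. 1 \<le> fst (ijl ! s) \<and> fst (ijl ! s) < snd (ijl ! s) \<and> snd (ijl ! s) \<le> n)
          \<and> (\<forall>s t. s < t \<and> t < l \<longrightarrow>
                cf_index n (fst (ijl ! s)) (snd (ijl ! s)) < cf_index n (fst (ijl ! t)) (snd (ijl ! t)))
          \<and> (\<forall>i. 1 \<le> i \<and> i < n \<longrightarrow>
                (if (i, Suc i) \<in> set ijl
                 then xel i \<in> V \<and> covers C0' le (u i) (xel i) \<and> covers C0' le (xel i) (u (Suc i))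
                 else covers C0' le (u i) (u (Suc i))))
          \<and> adjunct_rep V le C0'
              (map (\<lambda>s. (u (fst (ijl ! s)), u (snd (ijl ! s)), {(\<lambda>s. cel (ijl ! s)) s})) [0..<l])"
      unfolding Let_def C0x_def[symmetric]
    proof (intro conjI allI impI)
      show "length ijl = l" using l len_ijl by simp
      fix s assume s: "s < l"
      show "1 \<le> fst (ijl ! s)" "fst (ijl ! s) < snd (ijl ! s)" "snd (ijl ! s) \<le> n"
        using P_range[OF inP[OF s]] by auto
    next
      fix s t assume st: "s < t \<and> t < l"
      have ps: "ijl ! s \<in> P" "ijl ! t \<in> P" using inP st by auto
      have lt: "ijl ! s < ijl ! t" using sorted_wrt_nth_less[OF sorted_ijl] st l len_ijl by simp
      obtain i j where ij: "ijl ! s = (i, j)" by (cases "ijl ! s")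
      obtain i' j' where ij': "ijl ! t = (i', j')" by (cases "ijl ! t")
      have "i < i' \<or> (i = i' \<and> j < j')" using lt ij ij' by (auto simp: less_prod_def)
      thus "cf_index n (fst (ijl ! s)) (snd (ijl ! s)) < cf_index n (fst (ijl ! t)) (snd (ijl ! t))"
        using cf_mono P_range[OF ps(1)] P_range[OF ps(2)] ij ij' by auto
    next
      fix i assume i: "1 \<le> i \<and> i < n"
      show "if (i, Suc i) \<in> set ijl
                 then xel i \<in> V \<and> covers C0x le (u i) (xel i) \<and> covers C0x le (xel i) (u (Suc i))
                 else covers C0x le (u i) (u (Suc i))" using covs i by auto
    next
      show "adjunct_rep V le C0x (map (\<lambda>s. (u (fst (ijl ! s)), u (snd (ijl ! s)), {(\<lambda>s. cel (ijl ! s)) s})) [0..<l])"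
        using rep_ok psx_eq l by simp
    qed
  qed
qed

end


theorem mainTheorem12:
  fixes V :: "'a set" and le :: "'a \<Rightarrow> 'a \<Rightarrow> bool"
    and n l :: nat and u :: "nat \<Rightarrow> 'a"
  assumes "n \<ge> 2"
    and "fundamental_basic_block V le"
    and "\<forall>i\<in>{1..n}. \<forall>j\<in>{1..n}. i < j \<longrightarrow> le (u i) (u j) \<and> u i \<noteq> u j"
    and "{x. reducible V le x} = u ` {1..n}"
    and "nullity V le = int l"
  shows "(\<exists>(ij :: (nat \<times> nat) list) (c :: nat \<Rightarrow> 'a) (x :: nat \<Rightarrow> 'a).
            let C0' = u ` {1..n} \<union> {x i | i. (i, Suc i) \<in> set ij} in
            length ij = l
          \<and> (\<forall>s<l. 1 \<le> fst (ij ! s) \<and> fst (ij ! s) < snd (ij ! s) \<and> snd (ij ! s) \<le> n)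
          \<and> (\<forall>s t. s < t \<and> t < l \<longrightarrow>
                cf_index n (fst (ij ! s)) (snd (ij ! s)) < cf_index n (fst (ij ! t)) (snd (ij ! t)))
          \<and> (\<forall>i. 1 \<le> i \<and> i < n \<longrightarrow>
                (if (i, Suc i) \<in> set ij
                 then x i \<in> V \<and> covers C0' le (u i) (x i) \<and> covers C0' le (x i) (u (Suc i))
                 else covers C0' le (u i) (u (Suc i))))
          \<and> adjunct_rep V le C0'
              (map (\<lambda>s. (u (fst (ij ! s)), u (snd (ij ! s)), {c s})) [0..<l]))
       \<and> (\<exists>S f. sublattice (cf_carrier n) cf_le S
              \<and> {U i | i. 1 \<le> i \<and> i \<le> n} \<subseteq> S
              \<and> order_iso V le S cf_le f
              \<and> (\<forall>i\<in>{1..n}. f (u i) = U i))"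
proof -
  have rc: "rc_lattice V le" and bb: "basic_block V le"
    and ex: "\<exists>C0 ps. adjunct_rep V le C0 ps \<and> distinct (map (\<lambda>(a, b, C). (a, b)) ps)"
    using assms(2) unfolding fundamental_basic_block_def by auto
  obtain C0 ps where C0: "adjunct_rep V le C0 ps" "distinct (map (\<lambda>(a, b, C). (a, b)) ps)" using ex by blast
  have lat: "fin_lattice V le" using rc unfolding rc_lattice_def by auto
  interpret mn: main V le n u C0 ps
    by (unfold_locales) (use assms lat bb C0 in auto)
  show ?thesis by (rule mn.result[OF assms(5)])
qed

end
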